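(* Consider the Polyhedral Clinching Auction run on the modified market as described in the context, with all participants reporting truthfully. At the moment just before the clinching step of any iteration, let $x_i=w(E_i)$ for the current $w$, let $d$ be the current demands, and let $X=\{i\in N: d_i>0\}$. Then for every $S\subseteq X$, $g_{x,d}(S)\ge x^*(S)-x(S)$.
   Context: Market model. Buyers $N_0=\{1,\dots,n\}$, sellers $M=\{1,\dots,m\}$, bipartite edge set $E_0\subseteq N_0\times M$; edge $(i,j)$ written $ij$; for a set $S$ of participants $E_S$ is the set of edges incident to a member of $S$ ($E_i=E_{\{i\}}$); $w(F)=\sum_{e\in F}w_e$. Each seller $j$ has a monotone submodular $f_j:2^{E_j}\to\mathbb R_+$, $f_j(\emptyset)=0$ ($f_j(E_j)$ = her total amount of a homogeneous divisible good). Buyer $i$ has per-unit valuation $v_i>0$ and budget $B_i\ge0$; seller $j$ has per-unit valuation $\rho_j>0$. Modified market. For each seller $j$ add a virtual buyer $n+j$ adjacent only to $j$ with $v_{n+j}=\rho_j$, $B_{n+j}=\infty$; $V=\{n+1,\dots,n+m\}$, $N=\{1,\dots,n+m\}$, $E=E_0\cup\{(n+j)j\}$; extend $f_j$ by $f_j(F)=f_j(E_j)$ if $(n+j)j\in F$, unchanged otherwise; $P_j=\{y\in\mathbb R^{E_j}_+:y(F)\le f_j(F)\ \forall F\}$, $P=\{w\in\mathbb R^E_+:w|_{E_j}\in P_j\ \forall j\}$, $f(S)=\sum_jf_j(S\cap E_j)$. For $i\in N$, $H_i$ is the set of buyers $k$ with $v_k>v_i$, or $v_k=v_i$ and $k<i$;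 $x^*\in\mathbb R^N_+$ is defined recursively (decreasing valuation, ties by index) by $x^*_i=\min(B_i/v_i,\min_{H\subseteq H_i}\{f(E_{H\cup\{i\}})-x^*(H)\})$ (an optimal liquid-welfare allocation). For $x\in\mathbb R^N_+$, $d\in[0,\infty]^N$ and $S\subseteq N$: $g_{x,d}(S)=\min_{S'\subseteq S}\bigl\{\min_{S'\subseteq S''\subseteq N}\{f(E_{S''})-x(S'')\}+d(S\setminus S')\bigr\}$. Polyhedral Clinching Auction (PCA) with step $\varepsilon>0$: bids $v'_i$ for $i\in N$ (virtual buyer $n+j$ bids seller $j$'s bid), all assumed to be positive integer multiples of $\varepsilon$. State: $w\in\mathbb R^E_+$, payments $p\in\mathbb R^N_+$, revenues $r\in\mathbb R^M_+$, price clocks $c_i$, demands $d_i\in[0,\infty]$; initially $w=0,p=0,r=0$, $c_i=0$, $d_i=\infty$, pointer $l=1$. For $w,d$ let $P_{w,d}=\{y\in\mathbb R^E_+: w+y\in P,\ y(E_k)\le d_k\ \forall k\}$ and for $\xi\in\mathbb R^{E_i}_+$ let $P^i_{w,d}(\xi)=\{u\in\mathbb R^{N\setminus\{i\}}_+:\exists y\in P_{w,d},\ y|_{E_i}=\xi,\ y(E_k)=u_k\ \forall k\ne i\}$. While some $d_i\neq 0$, an iteration does: (1) clinching step: for $i=1,\dots,n+m$ in turn, choose a maximal $\xi_i\in\mathbb R^{E_i}_+$ with $P^i_{w,d}(\xi_i)=P^i_{w,d}(0)$, set $p_i\leftarrow p_i+c_i\xi_i(E_i)$, $w_{ij}\leftarrow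 w_{ij}+\xi_{ij}$, and reset every demand to $d_k=(B_k-p_k)/c_k$ if $c_k<v'_k$ and $d_k=0$ otherwise ($d_k=\infty$ while $c_k=0$); then $r_j\leftarrow r_j+\sum_{ij\in E_j}c_i\xi_{ij}$; (2) $c_l\leftarrow c_l+\varepsilon$ and $d_l\leftarrow(B_l-p_l)/c_l$ if $c_l<v'_l$, else $d_l\leftarrow0$; (3) advance $l$ cyclically. Truthful reporting means $v'_i=v_i$ for all $i\in N$. *)

theory Defs
  imports Complex_Main "HOL-Library.Extended_Real"
begin

(* ---------- Modified market ----------
   Buyers 1..n, virtual buyers n+1..n+m (virtual buyer n+j belongs to seller j),
   sellers 1..m.  Edges are pairs (buyer, seller). *)

definition NN :: "nat \<Rightarrow> nat \<Rightarrow> nat set" where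
  "NN n m = {1..n+m}"

definition EE :: "nat \<Rightarrow> nat \<Rightarrow> (nat \<times> nat) set \<Rightarrow> (nat \<times> nat) set" where
  "EE n m E0 = E0 \<union> {(n + j, j) | j. j \<in> {1..m}}"

definition Eb :: "nat \<Rightarrow> nat \<Rightarrow> (nat \<times> nat) set \<Rightarrow> nat set \<Rightarrow> (nat \<times> nat) set" where
  "Eb n m E0 S = {e \<in> EE n m E0. fst e \<in> S}"

definition Es :: "nat \<Rightarrow> nat \<Rightarrow> (nat \<times> nat) set \<Rightarrow> nat \<Rightarrow> (nat \<times> nat) set" where
  "Es n m E0 j = {e \<in> EE n m E0. snd e = j}"

definition fx :: "nat \<Rightarrow> (nat \<times> nat) set \<Rightarrow> (nat \<Rightarrow> (nat \<times> nat) set \<Rightarrow> real)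
                   \<Rightarrow> nat \<Rightarrow> (nat \<times> nat) set \<Rightarrow> real" where
  "fx n E0 f j F = (if (n + j, j) \<in> F then f j {e \<in> E0. snd e = j} else f j F)"

definition fN :: "nat \<Rightarrow> nat \<Rightarrow> (nat \<times> nat) set \<Rightarrow> (nat \<Rightarrow> (nat \<times> nat) set \<Rightarrow> real)
                   \<Rightarrow> (nat \<times> nat) set \<Rightarrow> real" where
  "fN n m E0 f F = (\<Sum>j\<in>{1..m}. fx n E0 f j (F \<inter> Es n m E0 j))"

definition inP :: "nat \<Rightarrow> nat \<Rightarrow> (nat \<times> nat) set \<Rightarrow> (nat \<Rightarrow> (nat \<times> nat) set \<Rightarrow> real)
                   \<Rightarrow> (nat \<times> nat \<Rightarrow> real) \<Rightarrow> bool" where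
  "inP n m E0 f w \<longleftrightarrow>
     (\<forall>e. 0 \<le> w e) \<and> (\<forall>e. e \<notin> EE n m E0 \<longrightarrow> w e = 0) \<and>
     (\<forall>j\<in>{1..m}. \<forall>F. F \<subseteq> Es n m E0 j \<longrightarrow> sum w F \<le> fx n E0 f j F)"

definition Vx :: "nat \<Rightarrow> (nat \<Rightarrow> real) \<Rightarrow> (nat \<Rightarrow> real) \<Rightarrow> nat \<Rightarrow> real" where
  "Vx n v rho k = (if k \<le> n then v k else rho (k - n))"

definition Hs :: "nat \<Rightarrow> nat \<Rightarrow> (nat \<Rightarrow> real) \<Rightarrow> (nat \<Rightarrow> real) \<Rightarrow> nat \<Rightarrow> nat set" where
  "Hs n m v rho i = {k \<in> NN n m. Vx n v rho k > Vx n v rho i \<or>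
                                  (Vx n v rho k = Vx n v rho i \<and> k < i)}"

(* xs satisfies the recursive definition of x^* (B_{n+j} = \<infinity>, so the budget term is
   absent for virtual buyers); this determines xs uniquely on N *)
definition xstar_eqs :: "nat \<Rightarrow> nat \<Rightarrow> (nat \<times> nat) set \<Rightarrow> (nat \<Rightarrow> (nat \<times> nat) set \<Rightarrow> real)
     \<Rightarrow> (nat \<Rightarrow> real) \<Rightarrow> (nat \<Rightarrow> real) \<Rightarrow> (nat \<Rightarrow> real) \<Rightarrow> (nat \<Rightarrow> real) \<Rightarrow> bool" where
  "xstar_eqs n m E0 f v B rho xs \<longleftrightarrow>
     (\<forall>i\<in>NN n m.
        xs i = (let mH = Min {fN n m E0 f (Eb n m E0 (H \<union> {i})) - sum xs H | H. H \<subseteq> Hs n m v rho i}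
                in if i \<le> n then min (B i / v i) mH else mH))"

definition gfun :: "nat \<Rightarrow> nat \<Rightarrow> (nat \<times> nat) set \<Rightarrow> (nat \<Rightarrow> (nat \<times> nat) set \<Rightarrow> real)
     \<Rightarrow> (nat \<Rightarrow> real) \<Rightarrow> (nat \<Rightarrow> ereal) \<Rightarrow> nat set \<Rightarrow> ereal" where
  "gfun n m E0 f x d S =
     Min {Min {ereal (fN n m E0 f (Eb n m E0 S'') - sum x S'') | S''. S' \<subseteq> S'' \<and> S'' \<subseteq> NN n m}
            + sum d (S - S') | S'. S' \<subseteq> S}"

record pca_state =
  wt  :: "nat \<times> nat \<Rightarrow> real"
  pay :: "nat \<Rightarrow> real"
  rev :: "nat \<Rightarrow> real"
  clk :: "nat \<Rightarrow> real"
  dem :: "nat \<Rightarrow> ereal"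
  ptr :: nat

definition pca_init :: pca_state where
  "pca_init = \<lparr>wt = (\<lambda>_. 0), pay = (\<lambda>_. 0), rev = (\<lambda>_. 0), clk = (\<lambda>_. 0),
               dem = (\<lambda>_. \<infinity>), ptr = 1\<rparr>"

(* demand of participant k given clock c, payments p, bids bid; budgets B_{n+j} = \<infinity> *)
definition demand :: "nat \<Rightarrow> (nat \<Rightarrow> real) \<Rightarrow> (nat \<Rightarrow> real) \<Rightarrow> (nat \<Rightarrow> real) \<Rightarrow> (nat \<Rightarrow> real)
                      \<Rightarrow> nat \<Rightarrow> ereal" where
  "demand n B bid c p k =
     (if c k = 0 then \<infinity>
      else if c k < bid k then (if k \<le> n then ereal ((B k - p k) / c k) else \<infinity>)
      else 0)"

definition Pwd :: "nat \<Rightarrow> nat \<Rightarrow> (nat \<times> nat) set \<Rightarrow> (nat \<Rightarrow> (nat \<times> nat) set \<Rightarrow> real)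
     \<Rightarrow> (nat \<times> nat \<Rightarrow> real) \<Rightarrow> (nat \<Rightarrow> ereal) \<Rightarrow> (nat \<times> nat \<Rightarrow> real) set" where
  "Pwd n m E0 f w d = {y. (\<forall>e. 0 \<le> y e) \<and> (\<forall>e. e \<notin> EE n m E0 \<longrightarrow> y e = 0) \<and>
       inP n m E0 f (\<lambda>e. w e + y e) \<and>
       (\<forall>k\<in>NN n m. ereal (sum y (Eb n m E0 {k})) \<le> d k)}"

definition Pi_wd :: "nat \<Rightarrow> nat \<Rightarrow> (nat \<times> nat) set \<Rightarrow> (nat \<Rightarrow> (nat \<times> nat) set \<Rightarrow> real)
     \<Rightarrow> (nat \<times> nat \<Rightarrow> real) \<Rightarrow> (nat \<Rightarrow> ereal) \<Rightarrow> nat \<Rightarrow> (nat \<times> nat \<Rightarrow> real) \<Rightarrow> (nat \<Rightarrow> real) set" where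
  "Pi_wd n m E0 f w d i xi = {u. \<exists>y\<in>Pwd n m E0 f w d.
       (\<forall>e\<in>Eb n m E0 {i}. y e = xi e) \<and>
       (\<forall>k\<in>NN n m - {i}. u k = sum y (Eb n m E0 {k})) \<and>
       (\<forall>k. k \<notin> NN n m - {i} \<longrightarrow> u k = 0)}"

definition clinchable :: "nat \<Rightarrow> nat \<Rightarrow> (nat \<times> nat) set \<Rightarrow> (nat \<Rightarrow> (nat \<times> nat) set \<Rightarrow> real)
     \<Rightarrow> (nat \<times> nat \<Rightarrow> real) \<Rightarrow> (nat \<Rightarrow> ereal) \<Rightarrow> nat \<Rightarrow> (nat \<times> nat \<Rightarrow> real) \<Rightarrow> bool" where
  "clinchable n m E0 f w d i xi \<longleftrightarrow>
     (\<forall>e. 0 \<le> xi e) \<and> (\<forall>e. e \<notin> Eb n m E0 {i} \<longrightarrow> xi e = 0) \<and>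
     Pi_wd n m E0 f w d i xi = Pi_wd n m E0 f w d i (\<lambda>_. 0)"

definition max_clinch :: "nat \<Rightarrow> nat \<Rightarrow> (nat \<times> nat) set \<Rightarrow> (nat \<Rightarrow> (nat \<times> nat) set \<Rightarrow> real)
     \<Rightarrow> (nat \<times> nat \<Rightarrow> real) \<Rightarrow> (nat \<Rightarrow> ereal) \<Rightarrow> nat \<Rightarrow> (nat \<times> nat \<Rightarrow> real) \<Rightarrow> bool" where
  "max_clinch n m E0 f w d i xi \<longleftrightarrow>
     clinchable n m E0 f w d i xi \<and>
     \<not> (\<exists>xi'. clinchable n m E0 f w d i xi' \<and> (\<forall>e. xi e \<le> xi' e) \<and> xi' \<noteq> xi)"

definition clinch_update :: "nat \<Rightarrow> nat \<Rightarrow> (nat \<times> nat) set \<Rightarrow> (nat \<Rightarrow> real) \<Rightarrow> (nat \<Rightarrow> real)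
     \<Rightarrow> nat \<Rightarrow> (nat \<times> nat \<Rightarrow> real) \<Rightarrow> pca_state \<Rightarrow> pca_state" where
  "clinch_update n m E0 B bid i xi st =
     (let p' = (pay st)(i := pay st i + clk st i * sum xi (Eb n m E0 {i}))
      in st\<lparr>wt := (\<lambda>e. wt st e + xi e),
            pay := p',
            dem := demand n B bid (clk st) p',
            rev := (\<lambda>j. rev st j + (\<Sum>e\<in>Es n m E0 j \<inter> Eb n m E0 {i}. clk st (fst e) * xi e))\<rparr>)"

inductive clinch_upto :: "nat \<Rightarrow> nat \<Rightarrow> (nat \<times> nat) set \<Rightarrow> (nat \<Rightarrow> (nat \<times> nat) set \<Rightarrow> real)
     \<Rightarrow> (nat \<Rightarrow> real) \<Rightarrow> (nat \<Rightarrow> real) \<Rightarrow> nat \<Rightarrow> pca_state \<Rightarrow> pca_state \<Rightarrow> bool"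
  for n m E0 f B bid where
  clinch_zero: "clinch_upto n m E0 f B bid 0 st st"
| clinch_step: "clinch_upto n m E0 f B bid k st st1 \<Longrightarrow> k + 1 \<le> n + m \<Longrightarrow>
     max_clinch n m E0 f (wt st1) (dem st1) (k + 1) xi \<Longrightarrow>
     clinch_upto n m E0 f B bid (k + 1) st (clinch_update n m E0 B bid (k + 1) xi st1)"

definition clock_advance :: "nat \<Rightarrow> nat \<Rightarrow> (nat \<Rightarrow> real) \<Rightarrow> (nat \<Rightarrow> real) \<Rightarrow> real
     \<Rightarrow> pca_state \<Rightarrow> pca_state" where
  "clock_advance n m B bid eps st =
     (let l = ptr st; c' = (clk st)(l := clk st l + eps)
      in st\<lparr>clk := c',
            dem := (dem st)(l := demand n B bid c' (pay st) l),
            ptr := (if l < n + m then l + 1 else 1)\<rparr>)"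

definition pca_iter :: "nat \<Rightarrow> nat \<Rightarrow> (nat \<times> nat) set \<Rightarrow> (nat \<Rightarrow> (nat \<times> nat) set \<Rightarrow> real)
     \<Rightarrow> (nat \<Rightarrow> real) \<Rightarrow> (nat \<Rightarrow> real) \<Rightarrow> real \<Rightarrow> pca_state \<Rightarrow> pca_state \<Rightarrow> bool" where
  "pca_iter n m E0 f B bid eps st st' \<longleftrightarrow>
     (\<exists>st1. clinch_upto n m E0 f B bid (n + m) st st1 \<and> st' = clock_advance n m B bid eps st1)"

(* states reachable at the beginning of an iteration (loop head), for any admissible choices *)
inductive pca_reach :: "nat \<Rightarrow> nat \<Rightarrow> (nat \<times> nat) set \<Rightarrow> (nat \<Rightarrow> (nat \<times> nat) set \<Rightarrow> real)
     \<Rightarrow> (nat \<Rightarrow> real) \<Rightarrow> (nat \<Rightarrow> real) \<Rightarrow> real \<Rightarrow> pca_state \<Rightarrow> bool"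
  for n m E0 f B bid eps where
  reach_init: "pca_reach n m E0 f B bid eps pca_init"
| reach_iter: "pca_reach n m E0 f B bid eps st \<Longrightarrow> (\<exists>i\<in>NN n m. dem st i \<noteq> 0) \<Longrightarrow>
     pca_iter n m E0 f B bid eps st st' \<Longrightarrow> pca_reach n m E0 f B bid eps st'"

end

theory Submission
  imports Defs
begin


definition cutval :: "nat set \<Rightarrow> (nat \<Rightarrow> (nat\<times>nat) set \<Rightarrow> real) \<Rightarrow> (nat \<Rightarrow> real) \<Rightarrow> nat set
   \<Rightarrow> nat set \<Rightarrow> (nat \<Rightarrow> (nat\<times>nat) set) \<Rightarrow> real" where
  "cutval Js c d U A G = (\<Sum>j\<in>Js. c j (G j)) + sum d (U - A)"

definition validcut :: "(nat\<times>nat) set \<Rightarrow> nat set \<Rightarrow> nat set \<Rightarrow> (nat\<times>nat) set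
   \<Rightarrow> nat set \<Rightarrow> (nat \<Rightarrow> (nat\<times>nat) set) \<Rightarrow> bool" where
  "validcut EEx Js U Al A G \<longleftrightarrow> A \<subseteq> U \<and>
     (\<forall>j\<in>Js. G j \<subseteq> {e\<in>EEx. snd e = j} \<and> {e\<in>Al. fst e \<in> A \<and> snd e = j} \<subseteq> G j)"

lemma sum_fupd:
  fixes d :: "nat \<Rightarrow> real"
  assumes "finite X"
  shows "sum (d(k := a)) X = sum d X - (if k \<in> X then d k - a else 0)"
proof (cases "k \<in> X")
  case True
  have "sum (d(k := a)) X = a + sum (d(k := a)) (X - {k})"
    using sum.remove[OF assms True, of "d(k := a)"] by simp
  also have "sum (d(k := a)) (X - {k}) = sum d (X - {k})"
    by (rule sum.cong) auto
  finally have h1: "sum (d(k := a)) X = a + sum d (X - {k})" .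
  have h2: "sum d X = d k + sum d (X - {k})" by (rule sum.remove[OF assms True])
  have e1: "sum (d(k := a)) X = sum d X - (d k - a)" using h1 h2 by linarith
  have e2: "(if k \<in> X then d k - a else 0) = d k - a" using True by simp
  show ?thesis unfolding e2 by (rule e1)
next
  case False
  have "sum (d(k := a)) X = sum d X" using False by (intro sum.cong) auto
  then show ?thesis using False by simp
qed

lemma mfmc:
  fixes EEx :: "(nat\<times>nat) set" and Js U :: "nat set" and Al :: "(nat\<times>nat) set"
    and c :: "nat \<Rightarrow> (nat\<times>nat) set \<Rightarrow> real" and d :: "nat \<Rightarrow> real" and R :: real
  assumes fin: "finite EEx" "finite Js" "finite U"
    and Al: "Al \<subseteq> EEx" "\<forall>e\<in>Al. fst e \<in> U \<and> snd e \<in> Js"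
    and c_nonneg: "\<forall>j\<in>Js. \<forall>F. F \<subseteq> {e\<in>EEx. snd e = j} \<longrightarrow> 0 \<le> c j F"
    and c_empty: "\<forall>j\<in>Js. c j {} = 0"
    and c_sub: "\<forall>j\<in>Js. \<forall>F G. F \<subseteq> {e\<in>EEx. snd e = j} \<longrightarrow> G \<subseteq> {e\<in>EEx. snd e = j} \<longrightarrow>
                  c j (F \<union> G) + c j (F \<inter> G) \<le> c j F + c j G"
    and d_nonneg: "\<forall>k\<in>U. 0 \<le> d k"
    and cut: "\<forall>A G. validcut EEx Js U Al A G \<longrightarrow> R \<le> cutval Js c d U A G"
  shows "\<exists>y. (\<forall>e. 0 \<le> y e) \<and> (\<forall>e. e \<notin> Al \<longrightarrow> y e = 0) \<and>
             (\<forall>j\<in>Js. \<forall>F. F \<subseteq> {e\<in>EEx. snd e = j} \<longrightarrow> sum y F \<le> c j F) \<and>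
             (\<forall>k\<in>U. sum y {e\<in>Al. fst e = k} \<le> d k) \<and> R \<le> sum y Al"
proof -
  have "finite Al" using Al(1) fin(1) finite_subset by blast
  then show ?thesis using Al c_nonneg c_empty c_sub d_nonneg cut
  proof (induction Al arbitrary: c d R rule: finite_induct)
    case empty
    have "validcut EEx Js U {} U (\<lambda>_. {})" unfolding validcut_def by auto
    then have "R \<le> cutval Js c d U U (\<lambda>_. {})" using empty.prems(7) by blast
    then have R0: "R \<le> 0" unfolding cutval_def using empty.prems(4) by simp
    show ?case
      by (rule exI[of _ "\<lambda>_. 0"]) (use R0 empty.prems(3,6) in auto)
  next
    case (insert e Al0)
    note prems = insert.prems
    define k0 where "k0 = fst e"
    define j0 where "j0 = snd e"
    have eE: "e \<in> EEx" using prems(1) by auto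
    have k0U: "k0 \<in> U" and j0J: "j0 \<in> Js" using prems(2) k0_def j0_def by auto
    have cutA: "\<And>A G. validcut EEx Js U (insert e Al0) A G \<Longrightarrow> R \<le> cutval Js c d U A G"
      using prems(7) by blast
    define LB where "LB = insert 0 {R - cutval Js c d U A G | A G.
        validcut EEx Js U Al0 A G \<and> k0 \<in> A \<and> e \<notin> G j0}"
    have LB_cases: "lb = 0 \<or> (\<exists>A G. lb = R - cutval Js c d U A G \<and>
        validcut EEx Js U Al0 A G \<and> k0 \<in> A \<and> e \<notin> G j0)" if "lb \<in> LB" for lb
      using that unfolding LB_def by blast
    have ES_fin: "\<And>j. finite {e\<in>EEx. snd e = j}" using fin(1) by auto
    have b1: "lb \<le> c j0 F" if "lb \<in> LB" "F \<subseteq> {e\<in>EEx. snd e = j0}" "e \<in> F" for lb F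
    proof -
      from LB_cases[OF that(1)] consider "lb = 0" | A G where "lb = R - cutval Js c d U A G"
        "validcut EEx Js U Al0 A G" "k0 \<in> A" "e \<notin> G j0" by blast
      then show ?thesis
      proof cases
        case 1 then show ?thesis using prems(3) j0J that(2) by auto
      next
        case (2 A G)
        define G' where "G' = G(j0 := G j0 \<union> F)"
        have v': "validcut EEx Js U (insert e Al0) A G'"
          using 2(2) that(2,3) j0J unfolding validcut_def G'_def by auto
        have "\<forall>j\<in>Js. c j (G' j) \<le> c j (G j) + (if j = j0 then c j0 F else 0)"
        proof
          fix j assume jJ: "j \<in> Js"
          show "c j (G' j) \<le> c j (G j) + (if j = j0 then c j0 F else 0)"
          proof (cases "j = j0")
            case True
            have Gs: "G j0 \<subseteq> {e\<in>EEx. snd e = j0}" using 2(2) j0J unfolding validcut_def by auto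
            have "c j0 (G j0 \<union> F) + c j0 (G j0 \<inter> F) \<le> c j0 (G j0) + c j0 F"
              using prems(5) j0J Gs that(2) by blast
            moreover have "0 \<le> c j0 (G j0 \<inter> F)"
              by (rule prems(3)[rule_format, OF j0J]) (use Gs in blast)
            ultimately show ?thesis using True G'_def by simp
          next
            case False then show ?thesis using G'_def by simp
          qed
        qed
        then have "(\<Sum>j\<in>Js. c j (G' j)) \<le> (\<Sum>j\<in>Js. c j (G j) + (if j = j0 then c j0 F else 0))"
          by (intro sum_mono) (erule bspec)
        also have "\<dots> = (\<Sum>j\<in>Js. c j (G j)) + c j0 F"
          using j0J fin(2) by (simp add: sum.distrib)
        finally have "cutval Js c d U A G' \<le> cutval Js c d U A G + c j0 F"
          unfolding cutval_def by simp
        with cutA[OF v'] 2(1) show ?thesis by simp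
      qed
    qed
    have b2: "lb \<le> d k0" if "lb \<in> LB" for lb
    proof -
      from LB_cases[OF that(1)] consider "lb = 0" | A G where "lb = R - cutval Js c d U A G"
        "validcut EEx Js U Al0 A G" "k0 \<in> A" "e \<notin> G j0" by blast
      then show ?thesis
      proof cases
        case 1 then show ?thesis using prems(6) k0U by auto
      next
        case (2 A G)
        have v': "validcut EEx Js U (insert e Al0) (A - {k0}) G"
          unfolding validcut_def
        proof (intro conjI ballI)
          show "A - {k0} \<subseteq> U" using 2(2) unfolding validcut_def by blast
        next
          fix j assume "j \<in> Js"
          then show "G j \<subseteq> {e \<in> EEx. snd e = j}" using 2(2) unfolding validcut_def by blast
          show "{x \<in> insert e Al0. fst x \<in> A - {k0} \<and> snd x = j} \<subseteq> G j"
            using 2(2) \<open>j \<in> Js\<close> k0_def unfolding validcut_def by blast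
        qed
        have "U - (A - {k0}) = insert k0 (U - A)" using k0U 2(3) by auto
        then have "sum d (U - (A - {k0})) = d k0 + sum d (U - A)"
          using fin(3) 2(3) by simp
        then have "cutval Js c d U (A - {k0}) G = cutval Js c d U A G + d k0"
          unfolding cutval_def by simp
        with cutA[OF v'] 2(1) show ?thesis by simp
      qed
    qed
    have b3: "lb \<le> cutval Js c d U A2 G2 - R" if "lb \<in> LB" "validcut EEx Js U Al0 A2 G2"
      "k0 \<notin> A2" "e \<in> G2 j0" for lb A2 G2
    proof -
      from LB_cases[OF that(1)] consider "lb = 0" | A G where "lb = R - cutval Js c d U A G"
        "validcut EEx Js U Al0 A G" "k0 \<in> A" "e \<notin> G j0" by blast
      then show ?thesis
      proof cases
        case 1
        have "validcut EEx Js U (insert e Al0) A2 G2"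
          unfolding validcut_def
        proof (intro conjI ballI)
          show "A2 \<subseteq> U" using that(2) unfolding validcut_def by blast
        next
          fix j assume "j \<in> Js"
          then show "G2 j \<subseteq> {e \<in> EEx. snd e = j}" using that(2) unfolding validcut_def by blast
          show "{x \<in> insert e Al0. fst x \<in> A2 \<and> snd x = j} \<subseteq> G2 j"
            using that(2,3) \<open>j \<in> Js\<close> k0_def unfolding validcut_def by blast
        qed
        from cutA[OF this] 1 show ?thesis by simp
      next
        case (2 A1 G1)
        have vu: "validcut EEx Js U (insert e Al0) (A1 \<union> A2) (\<lambda>j. G1 j \<union> G2 j)"
          unfolding validcut_def
        proof (intro conjI ballI)
          show "A1 \<union> A2 \<subseteq> U" using that(2) 2(2) unfolding validcut_def by blast
        next
          fix j assume jJ: "j \<in> Js"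
          then show "G1 j \<union> G2 j \<subseteq> {e \<in> EEx. snd e = j}" using that(2) 2(2) unfolding validcut_def by blast
          have s1: "{x \<in> Al0. fst x \<in> A1 \<and> snd x = j} \<subseteq> G1 j" using 2(2) jJ unfolding validcut_def by blast
          have s2: "{x \<in> Al0. fst x \<in> A2 \<and> snd x = j} \<subseteq> G2 j" using that(2) jJ unfolding validcut_def by blast
          show "{x \<in> insert e Al0. fst x \<in> A1 \<union> A2 \<and> snd x = j} \<subseteq> G1 j \<union> G2 j"
          proof
            fix x assume x: "x \<in> {x \<in> insert e Al0. fst x \<in> A1 \<union> A2 \<and> snd x = j}"
            show "x \<in> G1 j \<union> G2 j"
            proof (cases "x = e")
              case True then show ?thesis using x that(4) j0_def by auto
            next
              case False then show ?thesis using x s1 s2 by blast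
            qed
          qed
        qed
        have vi: "validcut EEx Js U (insert e Al0) (A1 \<inter> A2) (\<lambda>j. G1 j \<inter> G2 j)"
          unfolding validcut_def
        proof (intro conjI ballI)
          show "A1 \<inter> A2 \<subseteq> U" using that(2) 2(2) unfolding validcut_def by blast
        next
          fix j assume jJ: "j \<in> Js"
          then show "G1 j \<inter> G2 j \<subseteq> {e \<in> EEx. snd e = j}" using that(2) 2(2) unfolding validcut_def by blast
          have s1: "{x \<in> Al0. fst x \<in> A1 \<and> snd x = j} \<subseteq> G1 j" using 2(2) jJ unfolding validcut_def by blast
          have s2: "{x \<in> Al0. fst x \<in> A2 \<and> snd x = j} \<subseteq> G2 j" using that(2) jJ unfolding validcut_def by blast
          show "{x \<in> insert e Al0. fst x \<in> A1 \<inter> A2 \<and> snd x = j} \<subseteq> G1 j \<inter> G2 j"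
          proof
            fix x assume x: "x \<in> {x \<in> insert e Al0. fst x \<in> A1 \<inter> A2 \<and> snd x = j}"
            have "x \<noteq> e" using x that(3) k0_def by auto
            then show "x \<in> G1 j \<inter> G2 j" using x s1 s2 by blast
          qed
        qed
        have subm: "(\<Sum>j\<in>Js. c j (G1 j \<union> G2 j)) + (\<Sum>j\<in>Js. c j (G1 j \<inter> G2 j))
              \<le> (\<Sum>j\<in>Js. c j (G1 j)) + (\<Sum>j\<in>Js. c j (G2 j))"
        proof -
          have "(\<Sum>j\<in>Js. c j (G1 j \<union> G2 j) + c j (G1 j \<inter> G2 j)) \<le> (\<Sum>j\<in>Js. c j (G1 j) + c j (G2 j))"
          proof (rule sum_mono)
            fix j assume jJ: "j \<in> Js"
            have "G1 j \<subseteq> {e\<in>EEx. snd e = j}" "G2 j \<subseteq> {e\<in>EEx. snd e = j}"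
              using 2(2) that(2) jJ unfolding validcut_def by blast+
            then show "c j (G1 j \<union> G2 j) + c j (G1 j \<inter> G2 j) \<le> c j (G1 j) + c j (G2 j)"
              using prems(5) jJ by blast
          qed
          then show ?thesis by (simp add: sum.distrib)
        qed
        have dsum: "sum d (U - (A1 \<union> A2)) + sum d (U - (A1 \<inter> A2)) = sum d (U - A1) + sum d (U - A2)"
        proof -
          have "sum d ((U - A1) \<union> (U - A2)) + sum d ((U - A1) \<inter> (U - A2)) = sum d (U - A1) + sum d (U - A2)"
            using fin(3) by (simp add: sum.union_inter)
          moreover have "(U - A1) \<union> (U - A2) = U - (A1 \<inter> A2)" by auto
          moreover have "(U - A1) \<inter> (U - A2) = U - (A1 \<union> A2)" by auto
          ultimately show ?thesis by simp
        qed
        have "R \<le> cutval Js c d U (A1 \<union> A2) (\<lambda>j. G1 j \<union> G2 j)" using cutA[OF vu] .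
        moreover have "R \<le> cutval Js c d U (A1 \<inter> A2) (\<lambda>j. G1 j \<inter> G2 j)" using cutA[OF vi] .
        ultimately have "2 * R \<le> cutval Js c d U A1 G1 + cutval Js c d U A2 G2"
          using subm dsum unfolding cutval_def by linarith
        then show ?thesis using 2(1) by simp
      qed
    qed
    have eF: "{e} \<subseteq> {e\<in>EEx. snd e = j0}" using eE j0_def by auto
    have bdd: "bdd_above LB" by (rule bdd_aboveI[of _ "c j0 {e}"]) (rule b1[OF _ eF], auto)
    define t where "t = Sup LB"
    have LBne: "LB \<noteq> {}" unfolding LB_def by auto
    have t_ge: "lb \<le> t" if "lb \<in> LB" for lb using cSup_upper[OF that bdd] t_def by simp
    have t0: "0 \<le> t" using t_ge LB_def by auto
    have t1: "t \<le> c j0 F" if "F \<subseteq> {e\<in>EEx. snd e = j0}" "e \<in> F" for F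
      unfolding t_def using b1[OF _ that] LBne by (intro cSup_least) auto
    have t2: "t \<le> d k0" unfolding t_def using b2 LBne by (intro cSup_least) auto
    have t3: "t \<le> cutval Js c d U A2 G2 - R" if "validcut EEx Js U Al0 A2 G2"
      "k0 \<notin> A2" "e \<in> G2 j0" for A2 G2
      unfolding t_def using b3[OF _ that] LBne by (intro cSup_least) auto
    define c' where "c' = (\<lambda>j F. c j F - (if j = j0 \<and> e \<in> F then t else 0))"
    define d' where "d' = d(k0 := d k0 - t)"
    have csum: "(\<Sum>j\<in>Js. c' j (G j)) = (\<Sum>j\<in>Js. c j (G j)) - (if e \<in> G j0 then t else 0)" for G
    proof -
      have "(\<Sum>j\<in>Js. c' j (G j)) = (\<Sum>j\<in>Js. c j (G j) - (if j = j0 then (if e \<in> G j0 then t else 0) else 0))"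
        unfolding c'_def by (rule sum.cong) auto
      also have "\<dots> = (\<Sum>j\<in>Js. c j (G j)) - (if e \<in> G j0 then t else 0)"
        using j0J fin(2) by (simp add: sum_subtractf)
      finally show ?thesis .
    qed
    have dsum': "sum d' (U - A) = sum d (U - A) - (if k0 \<in> U - A then t else 0)" for A
      unfolding d'_def using sum_fupd[of "U - A" d k0 "d k0 - t"] fin(3) by simp
    have IH: "\<exists>y. (\<forall>e. 0 \<le> y e) \<and> (\<forall>e. e \<notin> Al0 \<longrightarrow> y e = 0) \<and>
             (\<forall>j\<in>Js. \<forall>F. F \<subseteq> {e\<in>EEx. snd e = j} \<longrightarrow> sum y F \<le> c' j F) \<and>
             (\<forall>k\<in>U. sum y {e\<in>Al0. fst e = k} \<le> d' k) \<and> R - t \<le> sum y Al0"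
    proof (rule insert.IH)
      show "Al0 \<subseteq> EEx" using prems(1) by auto
      show "\<forall>e\<in>Al0. fst e \<in> U \<and> snd e \<in> Js" using prems(2) by auto
      show "\<forall>j\<in>Js. \<forall>F. F \<subseteq> {e\<in>EEx. snd e = j} \<longrightarrow> 0 \<le> c' j F"
        using prems(3) t1 unfolding c'_def by auto
      show "\<forall>j\<in>Js. c' j {} = 0" using prems(4) unfolding c'_def by auto
      show "\<forall>j\<in>Js. \<forall>F G. F \<subseteq> {e\<in>EEx. snd e = j} \<longrightarrow> G \<subseteq> {e\<in>EEx. snd e = j} \<longrightarrow>
                  c' j (F \<union> G) + c' j (F \<inter> G) \<le> c' j F + c' j G"
      proof (intro ballI allI impI)
        fix j F G assume "j \<in> Js" "F \<subseteq> {e\<in>EEx. snd e = j}" "G \<subseteq> {e\<in>EEx. snd e = j}"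
        then have "c j (F \<union> G) + c j (F \<inter> G) \<le> c j F + c j G" using prems(5) by blast
        then show "c' j (F \<union> G) + c' j (F \<inter> G) \<le> c' j F + c' j G"
          unfolding c'_def by auto
      qed
      show "\<forall>k\<in>U. 0 \<le> d' k" using prems(6) t2 unfolding d'_def by auto
      show "\<forall>A G. validcut EEx Js U Al0 A G \<longrightarrow> R - t \<le> cutval Js c' d' U A G"
      proof (intro allI impI)
        fix A G assume v: "validcut EEx Js U Al0 A G"
        have AU: "A \<subseteq> U" using v validcut_def by auto
        have eq: "cutval Js c' d' U A G = cutval Js c d U A G - (if e \<in> G j0 then t else 0)
                    - (if k0 \<in> A then 0 else t)"
          unfolding cutval_def csum dsum' using k0U by auto
        show "R - t \<le> cutval Js c' d' U A G"
        proof (cases "k0 \<in> A")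
          case True
          show ?thesis
          proof (cases "e \<in> G j0")
            case True
            have "validcut EEx Js U (insert e Al0) A G" using v True unfolding validcut_def j0_def by auto
            with cutA eq \<open>k0 \<in> A\<close> True show ?thesis by fastforce
          next
            case False
            have "R - cutval Js c d U A G \<in> LB" unfolding LB_def using v \<open>k0 \<in> A\<close> False by blast
            with t_ge eq \<open>k0 \<in> A\<close> False show ?thesis by fastforce
          qed
        next
          case False
          have v2: "validcut EEx Js U (insert e Al0) A G" using v False unfolding validcut_def k0_def by auto
          show ?thesis
          proof (cases "e \<in> G j0")
            case True
            with t3[OF v False True] eq False show ?thesis by simp
          next
            case False2: False
            with cutA[OF v2] eq False t0 show ?thesis by simp
          qed
        qed
      qed
    qed
    then obtain y' where y'0: "\<forall>e. 0 \<le> y' e" and y'Al: "\<forall>e. e \<notin> Al0 \<longrightarrow> y' e = 0"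
      and y'c: "\<forall>j\<in>Js. \<forall>F. F \<subseteq> {e\<in>EEx. snd e = j} \<longrightarrow> sum y' F \<le> c' j F"
      and y'd: "\<forall>k\<in>U. sum y' {e\<in>Al0. fst e = k} \<le> d' k" and y'R: "R - t \<le> sum y' Al0"
      by blast
    define y where "y = (\<lambda>x. y' x + (if x = e then t else 0))"
    have ysum: "sum y F = sum y' F + (if e \<in> F then t else 0)" if "finite F" for F
      unfolding y_def using that by (simp add: sum.distrib sum.delta)
    show ?case
    proof (rule exI[of _ y], intro conjI)
      show "\<forall>x. 0 \<le> y x" using y'0 t0 y_def by simp
      show "\<forall>x. x \<notin> insert e Al0 \<longrightarrow> y x = 0" using y'Al y_def by simp
      show "\<forall>j\<in>Js. \<forall>F. F \<subseteq> {e\<in>EEx. snd e = j} \<longrightarrow> sum y F \<le> c j F"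
      proof (intro ballI allI impI)
        fix j F assume jJ: "j \<in> Js" and F: "F \<subseteq> {e\<in>EEx. snd e = j}"
        have fF: "finite F" using F ES_fin finite_subset by blast
        have "sum y' F \<le> c' j F" using y'c jJ F by blast
        moreover have "e \<in> F \<Longrightarrow> j = j0" using F j0_def by auto
        ultimately show "sum y F \<le> c j F" using ysum[OF fF] unfolding c'_def by auto
      qed
      show "\<forall>k\<in>U. sum y {x \<in> insert e Al0. fst x = k} \<le> d k"
      proof
        fix k assume kU: "k \<in> U"
        have fin0: "finite {x \<in> Al0. fst x = k}" using insert.hyps(1) by auto
        have "sum y {x \<in> insert e Al0. fst x = k} = sum y' {x \<in> Al0. fst x = k} + (if k = k0 then t else 0)"
        proof (cases "k = k0")
          case True
          then have "{x \<in> insert e Al0. fst x = k} = insert e {x \<in> Al0. fst x = k}" using k0_def by auto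
          moreover have "sum y {x \<in> Al0. fst x = k} = sum y' {x \<in> Al0. fst x = k}"
            using insert.hyps(2) y_def by (intro sum.cong) auto
          moreover have "y e = t" using y_def y'Al[rule_format, OF insert.hyps(2)] by simp
          ultimately show ?thesis using True fin0 insert.hyps(2) by simp
        next
          case False
          then have "{x \<in> insert e Al0. fst x = k} = {x \<in> Al0. fst x = k}" using k0_def by auto
          moreover have "sum y {x \<in> Al0. fst x = k} = sum y' {x \<in> Al0. fst x = k}"
            using insert.hyps(2) y_def by (intro sum.cong) auto
          ultimately show ?thesis using False by simp
        qed
        then show "sum y {x \<in> insert e Al0. fst x = k} \<le> d k"
          using y'd kU unfolding d'_def by (auto split: if_splits)
      qed
      have "sum y (insert e Al0) = y e + sum y Al0" using insert.hyps by simp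
      also have "sum y Al0 = sum y' Al0" using insert.hyps(2) y_def by (intro sum.cong) auto
      also have "y e = t" using y_def y'Al[rule_format, OF insert.hyps(2)] by simp
      finally show "R \<le> sum y (insert e Al0)" using y'R by simp
    qed
  qed
qed




locale mkt =
  fixes n m :: nat and E0 :: "(nat \<times> nat) set"
    and f :: "nat \<Rightarrow> (nat \<times> nat) set \<Rightarrow> real"
    and v B rho :: "nat \<Rightarrow> real" and eps :: real
    and xs :: "nat \<Rightarrow> real"
  assumes E0: "E0 \<subseteq> {1..n} \<times> {1..m}"
    and f_empty: "\<forall>j\<in>{1..m}. f j {} = 0"
    and f_nonneg: "\<forall>j\<in>{1..m}. \<forall>F. F \<subseteq> {e \<in> E0. snd e = j} \<longrightarrow> 0 \<le> f j F"
    and f_mono: "\<forall>j\<in>{1..m}. \<forall>F G. F \<subseteq> G \<and> G \<subseteq> {e \<in> E0. snd e = j} \<longrightarrow> f j F \<le> f j G"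
    and f_submod: "\<forall>j\<in>{1..m}. \<forall>F G. F \<subseteq> {e \<in> E0. snd e = j} \<and> G \<subseteq> {e \<in> E0. snd e = j} \<longrightarrow>
                      f j (F \<union> G) + f j (F \<inter> G) \<le> f j F + f j G"
    and v_pos: "\<forall>i\<in>{1..n}. 0 < v i"
    and B_nonneg: "\<forall>i\<in>{1..n}. 0 \<le> B i"
    and eps_pos: "0 < eps"
    and xstar: "xstar_eqs n m E0 f v B rho xs"
begin

abbreviation "EEm \<equiv> EE n m E0"
abbreviation "Esj \<equiv> Es n m E0"
abbreviation "Ebs \<equiv> Eb n m E0"
abbreviation "NNs \<equiv> NN n m"
abbreviation "bid \<equiv> Vx n v rho"
abbreviation "fxj \<equiv> fx n E0 f"
definition "xw w k = sum w (Ebs {k})"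

lemma fin_E0: "finite E0"
  using E0 finite_subset by blast

lemma fin_EE: "finite EEm"
proof -
  have "{(n + j, j) |j. j \<in> {1..m}} = (\<lambda>j. (n + j, j)) ` {1..m}" by auto
  then show ?thesis unfolding EE_def using fin_E0 by simp
qed

lemma fin_Es: "finite (Esj j)"
  unfolding Es_def using fin_EE by simp

lemma fin_Eb: "finite (Ebs S)"
  unfolding Eb_def using fin_EE by simp

lemma fin_NN: "finite NNs" unfolding NN_def by simp

lemma EE_cases: "e \<in> EEm \<Longrightarrow> (e \<in> E0 \<and> fst e \<in> {1..n} \<and> snd e \<in> {1..m}) \<or> (\<exists>j\<in>{1..m}. e = (n + j, j))"
  unfolding EE_def using E0 by auto

lemma EE_snd: "e \<in> EEm \<Longrightarrow> snd e \<in> {1..m}"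
  by (drule EE_cases) auto

lemma EE_fst: "e \<in> EEm \<Longrightarrow> fst e \<in> NNs"
  by (drule EE_cases) (auto simp: NN_def)

lemma virt_notin_E0: "(n + j, j) \<notin> E0"
  using E0 by auto

lemma Es_split: "j \<in> {1..m} \<Longrightarrow> Esj j = {e \<in> E0. snd e = j} \<union> {(n + j, j)}"
  unfolding Es_def EE_def by auto

lemma Es_sub_noV: "F \<subseteq> Esj j \<Longrightarrow> j \<in> {1..m} \<Longrightarrow> (n + j, j) \<notin> F \<Longrightarrow> F \<subseteq> {e \<in> E0. snd e = j}"
  using Es_split by auto

lemma fx_nonneg: "j \<in> {1..m} \<Longrightarrow> F \<subseteq> Esj j \<Longrightarrow> 0 \<le> fxj j F"
  unfolding fx_def using f_nonneg Es_sub_noV by auto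

lemma fx_empty: "j \<in> {1..m} \<Longrightarrow> fxj j {} = 0"
  unfolding fx_def using f_empty by auto

lemma fx_mono: "j \<in> {1..m} \<Longrightarrow> F \<subseteq> G \<Longrightarrow> G \<subseteq> Esj j \<Longrightarrow> fxj j F \<le> fxj j G"
proof -
  assume j: "j \<in> {1..m}" and FG: "F \<subseteq> G" and G: "G \<subseteq> Esj j"
  have T: "{e \<in> E0. snd e = j} \<subseteq> {e \<in> E0. snd e = j}" by simp
  show ?thesis
  proof (cases "(n + j, j) \<in> G")
    case True
    show ?thesis
    proof (cases "(n + j, j) \<in> F")
      case True with \<open>(n + j, j) \<in> G\<close> show ?thesis unfolding fx_def by simp
    next
      case False
      have "F \<subseteq> {e \<in> E0. snd e = j}" using Es_sub_noV[OF _ j False] FG G by blast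
      then show ?thesis unfolding fx_def using False True f_mono j by auto
    qed
  next
    case False
    then have "(n + j, j) \<notin> F" using FG by blast
    moreover have "G \<subseteq> {e \<in> E0. snd e = j}" using Es_sub_noV[OF G j False] .
    ultimately show ?thesis unfolding fx_def using False f_mono j FG by auto
  qed
qed

lemma fx_submod: "j \<in> {1..m} \<Longrightarrow> F \<subseteq> Esj j \<Longrightarrow> G \<subseteq> Esj j \<Longrightarrow>
    fxj j (F \<union> G) + fxj j (F \<inter> G) \<le> fxj j F + fxj j G"
proof -
  assume j: "j \<in> {1..m}" and F: "F \<subseteq> Esj j" and G: "G \<subseteq> Esj j"
  let ?V = "(n + j, j)" and ?T = "{e \<in> E0. snd e = j}"
  have mono: "fxj j X \<le> fxj j Y" if "X \<subseteq> Y" "Y \<subseteq> Esj j" for X Y using fx_mono[OF j that] .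
  consider "?V \<in> F" "?V \<in> G" | "?V \<in> F" "?V \<notin> G" | "?V \<notin> F" "?V \<in> G" | "?V \<notin> F" "?V \<notin> G" by blast
  then show ?thesis
  proof cases
    case 1 then show ?thesis unfolding fx_def by simp
  next
    case 2
    have "fxj j (F \<inter> G) \<le> fxj j G" using mono[of "F \<inter> G" G] G by blast
    moreover have "fxj j (F \<union> G) = fxj j F" using 2 unfolding fx_def by simp
    ultimately show ?thesis by simp
  next
    case 3
    have "fxj j (F \<inter> G) \<le> fxj j F" using mono[of "F \<inter> G" F] F by blast
    moreover have "fxj j (F \<union> G) = fxj j G" using 3 unfolding fx_def by simp
    ultimately show ?thesis by simp
  next
    case 4
    have "F \<subseteq> ?T" "G \<subseteq> ?T" using Es_sub_noV[OF F j] Es_sub_noV[OF G j] 4 by auto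
    then show ?thesis unfolding fx_def using 4 f_submod j by auto
  qed
qed

lemma Eb_single_disj: "k \<noteq> k' \<Longrightarrow> Ebs {k} \<inter> Ebs {k'} = {}"
  unfolding Eb_def by auto

lemma Eb_union: "Ebs S = (\<Union>k\<in>S. Ebs {k})"
  unfolding Eb_def by auto

lemma sum_agents:
  fixes w :: "nat \<times> nat \<Rightarrow> real"
  assumes "finite S"
  shows "(\<Sum>k\<in>S. sum w (Ebs {k})) = sum w (Ebs S)"
proof -
  have "sum w (\<Union>k\<in>S. Ebs {k}) = (\<Sum>k\<in>S. sum w (Ebs {k}))"
  proof (rule sum.UNION_disjoint)
    show "finite S" by (rule assms)
    show "\<forall>i\<in>S. finite (Ebs {i})" using fin_Eb by blast
    show "\<forall>i\<in>S. \<forall>j\<in>S. i \<noteq> j \<longrightarrow> Ebs {i} \<inter> Ebs {j} = {}" using Eb_single_disj by blast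
  qed
  then show ?thesis by (subst Eb_union[of S]) (rule sym)
qed

lemma sum_sellers:
  fixes w :: "nat \<times> nat \<Rightarrow> real"
  assumes "F \<subseteq> EEm"
  shows "(\<Sum>j\<in>{1..m}. sum w (F \<inter> Esj j)) = sum w F"
proof -
  have fF: "finite F" using assms fin_EE finite_subset by blast
  have "snd ` F \<subseteq> {1..m}" using assms EE_snd by blast
  then have "(\<Sum>j\<in>{1..m}. sum w {x. x \<in> F \<and> snd x = j}) = sum w F"
    using sum.group[OF fF _ , of "{1..m}" snd w] by simp
  moreover have "F \<inter> Esj j = {x. x \<in> F \<and> snd x = j}" for j
    using assms unfolding Es_def by auto
  ultimately show ?thesis by simp
qed

lemma Eb_sub_EE: "Ebs S \<subseteq> EEm" unfolding Eb_def by auto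
lemma Es_sub_EE: "Esj j \<subseteq> EEm" unfolding Es_def by auto

lemma fN_mono: "F \<subseteq> F' \<Longrightarrow> F' \<subseteq> EEm \<Longrightarrow> fN n m E0 f F \<le> fN n m E0 f F'"
  unfolding fN_def
  by (rule sum_mono) (rule fx_mono, auto simp: Es_def)

lemma fN_nonneg: "0 \<le> fN n m E0 f F"
  unfolding fN_def by (rule sum_nonneg) (rule fx_nonneg, auto simp: Es_def)

lemma Hs_sub: "Hs n m v rho i \<subseteq> NNs" unfolding Hs_def by auto

lemma xs_eq: "i \<in> NNs \<Longrightarrow> xs i = (let mH = Min {fN n m E0 f (Ebs (H \<union> {i})) - sum xs H | H. H \<subseteq> Hs n m v rho i}
                in if i \<le> n then min (B i / v i) mH else mH)"
  using xstar unfolding xstar_eqs_def by blast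

lemma fin_Hset: "finite {fN n m E0 f (Ebs (H \<union> {i})) - sum xs H | H. H \<subseteq> Hs n m v rho i}"
proof -
  have "finite (Hs n m v rho i)" using Hs_sub fin_NN finite_subset by blast
  then have "finite ((\<lambda>H. fN n m E0 f (Ebs (H \<union> {i})) - sum xs H) ` Pow (Hs n m v rho i))" by simp
  moreover have "{fN n m E0 f (Ebs (H \<union> {i})) - sum xs H | H. H \<subseteq> Hs n m v rho i}
      = (\<lambda>H. fN n m E0 f (Ebs (H \<union> {i})) - sum xs H) ` Pow (Hs n m v rho i)" by auto
  ultimately show ?thesis by simp
qed

lemma xs_le_H: "i \<in> NNs \<Longrightarrow> H \<subseteq> Hs n m v rho i \<Longrightarrow> xs i \<le> fN n m E0 f (Ebs (H \<union> {i})) - sum xs H"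
proof -
  assume i: "i \<in> NNs" and H: "H \<subseteq> Hs n m v rho i"
  let ?M = "Min {fN n m E0 f (Ebs (H \<union> {i})) - sum xs H | H. H \<subseteq> Hs n m v rho i}"
  have "xs i \<le> ?M" using xs_eq[OF i] by (simp add: Let_def)
  also have "?M \<le> fN n m E0 f (Ebs (H \<union> {i})) - sum xs H"
    by (rule Min_le[OF fin_Hset]) (use H in blast)
  finally show ?thesis .
qed

lemma xs_le_Bv: "i \<in> NNs \<Longrightarrow> i \<le> n \<Longrightarrow> xs i \<le> B i / v i"
  using xs_eq by (simp add: Let_def)

lemma xs_le_f: "A \<subseteq> NNs \<Longrightarrow> sum xs A \<le> fN n m E0 f (Ebs A)"
proof (cases "A = {}")
  case True then show ?thesis using fN_nonneg by simp
next
  case False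
  assume A: "A \<subseteq> NNs"
  have fA: "finite A" using A fin_NN finite_subset by blast
  define vm where "vm = Min (bid ` A)"
  have vmin: "vm \<in> bid ` A" using fA False vm_def by simp
  define i where "i = Max {k \<in> A. bid k = vm}"
  have ne: "{k \<in> A. bid k = vm} \<noteq> {}" using vmin by auto
  have iA: "i \<in> A" and iv: "bid i = vm" using Max_in[OF _ ne] fA i_def by auto
  have sub: "A - {i} \<subseteq> Hs n m v rho i"
  proof
    fix k assume k: "k \<in> A - {i}"
    have "vm \<le> bid k" using k fA vm_def by simp
    moreover have "bid k = vm \<Longrightarrow> k \<le> i" using k fA i_def by simp
    ultimately have "bid k > bid i \<or> (bid k = bid i \<and> k < i)" using iv k by force
    then show "k \<in> Hs n m v rho i" unfolding Hs_def using k A by auto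
  qed
  have "xs i \<le> fN n m E0 f (Ebs ((A - {i}) \<union> {i})) - sum xs (A - {i})"
    using xs_le_H[OF _ sub] iA A by blast
  moreover have "(A - {i}) \<union> {i} = A" using iA by auto
  moreover have "sum xs A = xs i + sum xs (A - {i})" using sum.remove[OF fA iA] .
  ultimately show ?thesis by simp
qed

lemma xs_nonneg: "i \<in> NNs \<Longrightarrow> 0 \<le> xs i"
proof -
  assume i: "i \<in> NNs"
  let ?S = "{fN n m E0 f (Ebs (H \<union> {i})) - sum xs H | H. H \<subseteq> Hs n m v rho i}"
  have "0 \<le> Min ?S"
  proof (subst Min_ge_iff[OF fin_Hset])
    show "?S \<noteq> {}" by blast
    show "\<forall>a\<in>?S. 0 \<le> a"
    proof
      fix a assume "a \<in> ?S"
      then obtain H where H: "H \<subseteq> Hs n m v rho i" and a: "a = fN n m E0 f (Ebs (H \<union> {i})) - sum xs H" by blast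
      have "sum xs H \<le> fN n m E0 f (Ebs H)" using xs_le_f H Hs_sub by blast
      also have "\<dots> \<le> fN n m E0 f (Ebs (H \<union> {i}))"
        by (rule fN_mono) (auto simp: Eb_def)
      finally show "0 \<le> a" using a by simp
    qed
  qed
  moreover have "i \<le> n \<Longrightarrow> 0 \<le> B i / v i" using i v_pos B_nonneg unfolding NN_def
    by (simp add: less_imp_le)
  ultimately show ?thesis using xs_eq[OF i] by (auto simp: Let_def)
qed

end



context mkt
begin

definition QP :: "(nat \<times> nat \<Rightarrow> real) \<Rightarrow> (nat \<Rightarrow> ereal) \<Rightarrow> bool" where
  "QP w d \<longleftrightarrow> (\<forall>S S' G. S \<subseteq> {k\<in>NNs. 0 < d k} \<longrightarrow> S' \<subseteq> S \<longrightarrow>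
      (\<forall>j\<in>{1..m}. G j \<subseteq> Esj j \<and> Esj j \<inter> Ebs S' \<subseteq> G j) \<longrightarrow>
      ereal (sum xs S - (\<Sum>k\<in>S. xw w k)) \<le> ereal (\<Sum>j\<in>{1..m}. fxj j (G j) - sum w (G j)) + sum d (S - S'))"

definition Bas :: "(nat \<times> nat \<Rightarrow> real) \<Rightarrow> (nat \<Rightarrow> real) \<Rightarrow> (nat \<Rightarrow> real) \<Rightarrow> bool" where
  "Bas w c p \<longleftrightarrow> (\<forall>k. 0 \<le> c k) \<and> (\<forall>k\<in>NNs. p k \<le> c k * xw w k) \<and> (\<forall>k\<in>NNs. k \<le> n \<longrightarrow> p k \<le> B k)"

definition Inv :: "pca_state \<Rightarrow> bool" where
  "Inv st \<longleftrightarrow> inP n m E0 f (wt st) \<and> (\<forall>k. dem st k = demand n B bid (clk st) (pay st) k) \<and>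
     Bas (wt st) (clk st) (pay st) \<and> QP (wt st) (dem st)"

lemma real_buyer: "k \<in> NNs \<Longrightarrow> k \<le> n \<Longrightarrow> bid k = v k \<and> 0 < v k \<and> 0 \<le> B k"
  unfolding Vx_def NN_def using v_pos B_nonneg by auto

lemma dem_nonneg: "Bas w c p \<Longrightarrow> k \<in> NNs \<Longrightarrow> 0 \<le> demand n B bid c p k"
proof -
  assume b: "Bas w c p" and k: "k \<in> NNs"
  have c0: "0 \<le> c k" using b Bas_def by auto
  show ?thesis
  proof (cases "c k = 0")
    case True then show ?thesis unfolding demand_def by simp
  next
    case False
    then have cp: "0 < c k" using c0 by simp
    show ?thesis
    proof (cases "c k < bid k \<and> k \<le> n")
      case True
      then have "p k \<le> B k" using b k Bas_def by auto
      then have "0 \<le> (B k - p k) / c k" using cp by simp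
      then show ?thesis unfolding demand_def using True False by simp
    next
      case False2: False
      then show ?thesis unfolding demand_def using False by auto
    qed
  qed
qed

lemma AP: "Bas w c p \<Longrightarrow> k \<in> NNs \<Longrightarrow> 0 < demand n B bid c p k \<Longrightarrow>
    ereal (xs k - xw w k) \<le> demand n B bid c p k"
proof -
  assume b: "Bas w c p" and k: "k \<in> NNs" and pos: "0 < demand n B bid c p k"
  have c0: "0 \<le> c k" using b Bas_def by auto
  show ?thesis
  proof (cases "c k = 0")
    case True then show ?thesis unfolding demand_def by simp
  next
    case False
    then have cp: "0 < c k" using c0 by simp
    have lt: "c k < bid k" using pos False unfolding demand_def by (auto split: if_splits)
    show ?thesis
    proof (cases "k \<le> n")
      case True
      obtain bv: "bid k = v k" "0 < v k" "0 \<le> B k" using real_buyer[OF k True] by blast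
      have pk: "p k \<le> c k * xw w k" using b k Bas_def by auto
      have "xs k \<le> B k / v k" using xs_le_Bv[OF k True] .
      also have "B k / v k \<le> B k / c k"
        using bv lt cp by (simp add: frac_le)
      finally have "xs k - xw w k \<le> B k / c k - xw w k" by simp
      also have "B k / c k - xw w k = (B k - c k * xw w k) / c k" using cp by (simp add: field_simps)
      also have "\<dots> \<le> (B k - p k) / c k" using pk cp by (simp add: divide_right_mono)
      finally show ?thesis unfolding demand_def using False lt True by simp
    next
      case False2: False
      then show ?thesis unfolding demand_def using False lt by simp
    qed
  qed
qed

lemma inP_nonneg: "inP n m E0 f w \<Longrightarrow> 0 \<le> w e"
  unfolding inP_def by blast

lemma inP_zero: "inP n m E0 f w \<Longrightarrow> e \<notin> EEm \<Longrightarrow> w e = 0"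
  unfolding inP_def by blast

lemma inP_le: "inP n m E0 f w \<Longrightarrow> j \<in> {1..m} \<Longrightarrow> F \<subseteq> Esj j \<Longrightarrow> sum w F \<le> fxj j F"
  unfolding inP_def by blast

lemma inP_down: "inP n m E0 f z \<Longrightarrow> (\<And>e. 0 \<le> z' e \<and> z' e \<le> z e) \<Longrightarrow> inP n m E0 f z'"
proof -
  assume z: "inP n m E0 f z" and le: "\<And>e. 0 \<le> z' e \<and> z' e \<le> z e"
  show ?thesis unfolding inP_def
  proof (intro conjI allI ballI impI)
    fix e show "0 \<le> z' e" using le by blast
  next
    fix e assume "e \<notin> EEm"
    then have "z e = 0" using inP_zero[OF z] by blast
    then show "z' e = 0" using le[of e] by simp
  next
    fix j F assume j: "j \<in> {1..m}" and F: "F \<subseteq> Esj j"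
    have "sum z' F \<le> sum z F" using le by (simp add: sum_mono)
    also have "\<dots> \<le> fxj j F" using inP_le[OF z j F] .
    finally show "sum z' F \<le> fxj j F" .
  qed
qed

lemma xw_nonneg: "inP n m E0 f w \<Longrightarrow> 0 \<le> xw w k"
  unfolding xw_def using inP_nonneg by (simp add: sum_nonneg)

lemma Pwd_zero: "inP n m E0 f w \<Longrightarrow> (\<forall>k\<in>NNs. 0 \<le> d k) \<Longrightarrow> (\<lambda>_. 0) \<in> Pwd n m E0 f w d"
  unfolding Pwd_def by (auto simp: zero_ereal_def)

lemma ereal_sum_le_cases:
  fixes D :: ereal and R C :: real
  assumes "\<not> (ereal R \<le> ereal C + D) \<Longrightarrow> False"
  shows "ereal R \<le> ereal C + D"
  using assms by blast

lemma flowlem: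
  assumes w: "inP n m E0 f w" and d0: "\<forall>k\<in>NNs. 0 \<le> d k" and Q: "QP w d"
    and S': "S' \<subseteq> {k\<in>NNs. 0 < d k}"
  shows "\<exists>y\<in>Pwd n m E0 f w d. (\<forall>e. e \<notin> Ebs S' \<longrightarrow> y e = 0) \<and>
            sum xs S' - (\<Sum>k\<in>S'. xw w k) \<le> sum y (Ebs S')"
proof -
  define R where "R = sum xs S' - (\<Sum>k\<in>S'. xw w k)"
  define c where "c = (\<lambda>j F. fxj j F - sum w F)"
  define dd where "dd = (\<lambda>k. if d k = \<infinity> then \<bar>R\<bar> + 1 else real_of_ereal (d k))"
  have S'N: "S' \<subseteq> NNs" using S' by blast
  have fS': "finite S'" by (rule finite_subset[OF S'N fin_NN])
  have dd0: "\<forall>k\<in>S'. 0 \<le> dd k"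
  proof
    fix k assume "k \<in> S'"
    then have "0 \<le> d k" using d0 S'N by blast
    then have "0 \<le> real_of_ereal (d k)" by (rule real_of_ereal_pos)
    then show "0 \<le> dd k" unfolding dd_def by simp
  qed
  have c0: "\<forall>j\<in>{1..m}. \<forall>F. F \<subseteq> {e\<in>EEm. snd e = j} \<longrightarrow> 0 \<le> c j F"
  proof (intro ballI allI impI)
    fix j F assume j: "j \<in> {1..m}" and F: "F \<subseteq> {e\<in>EEm. snd e = j}"
    then have "F \<subseteq> Esj j" by (simp add: Es_def)
    from inP_le[OF w j this] show "0 \<le> c j F" by (simp add: c_def)
  qed
  have "\<exists>y. (\<forall>e. 0 \<le> y e) \<and> (\<forall>e. e \<notin> Ebs S' \<longrightarrow> y e = 0) \<and>
             (\<forall>j\<in>{1..m}. \<forall>F. F \<subseteq> {e\<in>EEm. snd e = j} \<longrightarrow> sum y F \<le> c j F) \<and>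
             (\<forall>k\<in>S'. sum y {e\<in>Ebs S'. fst e = k} \<le> dd k) \<and> R \<le> sum y (Ebs S')"
  proof (rule mfmc)
    show "finite EEm" by (rule fin_EE)
    show "finite {1..m}" by simp
    show "finite S'" by (rule fS')
    show "Ebs S' \<subseteq> EEm" by (rule Eb_sub_EE)
    show "\<forall>e\<in>Ebs S'. fst e \<in> S' \<and> snd e \<in> {1..m}" unfolding Eb_def using EE_snd by auto
    show "\<forall>j\<in>{1..m}. \<forall>F. F \<subseteq> {e\<in>EEm. snd e = j} \<longrightarrow> 0 \<le> c j F" by (rule c0)
    show "\<forall>j\<in>{1..m}. c j {} = 0" unfolding c_def using fx_empty by simp
    show "\<forall>j\<in>{1..m}. \<forall>F G. F \<subseteq> {e\<in>EEm. snd e = j} \<longrightarrow> G \<subseteq> {e\<in>EEm. snd e = j} \<longrightarrow>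
                  c j (F \<union> G) + c j (F \<inter> G) \<le> c j F + c j G"
    proof (intro ballI allI impI)
      fix j F G assume j: "j \<in> {1..m}" and F: "F \<subseteq> {e\<in>EEm. snd e = j}" and G: "G \<subseteq> {e\<in>EEm. snd e = j}"
      have FE: "F \<subseteq> Esj j" "G \<subseteq> Esj j" using F G unfolding Es_def by auto
      have "finite F" "finite G" using FE fin_Es finite_subset by blast+
      then have "sum w (F \<union> G) + sum w (F \<inter> G) = sum w F + sum w G" by (rule sum.union_inter)
      with fx_submod[OF j FE] show "c j (F \<union> G) + c j (F \<inter> G) \<le> c j F + c j G"
        unfolding c_def by simp
    qed
    show "\<forall>k\<in>S'. 0 \<le> dd k" by (rule dd0)
    show "\<forall>A G. validcut EEm {1..m} S' (Ebs S') A G \<longrightarrow> R \<le> cutval {1..m} c dd S' A G"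
    proof (intro allI impI)
      fix A G assume v: "validcut EEm {1..m} S' (Ebs S') A G"
      have AS: "A \<subseteq> S'" using v validcut_def by blast
      have Gv: "\<forall>j\<in>{1..m}. G j \<subseteq> Esj j \<and> Esj j \<inter> Ebs A \<subseteq> G j"
      proof
        fix j assume j: "j \<in> {1..m}"
        have "G j \<subseteq> {e\<in>EEm. snd e = j}" "{e\<in>Ebs S'. fst e \<in> A \<and> snd e = j} \<subseteq> G j"
          using v j unfolding validcut_def by blast+
        moreover have "Esj j \<inter> Ebs A = {e\<in>Ebs S'. fst e \<in> A \<and> snd e = j}"
          using AS unfolding Es_def Eb_def by auto
        ultimately show "G j \<subseteq> Esj j \<and> Esj j \<inter> Ebs A \<subseteq> G j" unfolding Es_def by simp
      qed
      have QA: "ereal R \<le> ereal (\<Sum>j\<in>{1..m}. fxj j (G j) - sum w (G j)) + sum d (S' - A)"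
        using Q S' AS Gv unfolding QP_def R_def by blast
      have Cnn: "0 \<le> (\<Sum>j\<in>{1..m}. c j (G j))"
        by (rule sum_nonneg) (use c0 Gv in \<open>auto simp: Es_def\<close>)
      have ddnn: "0 \<le> sum dd (S' - A)" using dd0 by (auto intro: sum_nonneg)
      show "R \<le> cutval {1..m} c dd S' A G"
      proof (cases "\<exists>k\<in>S' - A. d k = \<infinity>")
        case True
        then obtain k where k: "k \<in> S' - A" "d k = \<infinity>" by blast
        have "sum dd (S' - A) = dd k + sum dd (S' - A - {k})"
          by (rule sum.remove) (use k fS' in auto)
        moreover have "0 \<le> sum dd (S' - A - {k})" using dd0 by (auto intro: sum_nonneg)
        moreover have "dd k = \<bar>R\<bar> + 1" using k dd_def by simp
        ultimately have "R \<le> sum dd (S' - A)" by linarith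
        then show ?thesis unfolding cutval_def using Cnn by linarith
      next
        case False
        have "sum d (S' - A) = (\<Sum>k\<in>S' - A. ereal (dd k))"
        proof (rule sum.cong)
          fix k assume k: "k \<in> S' - A"
          have "d k \<noteq> \<infinity>" using False k by blast
          moreover have "0 \<le> d k" using d0 k S'N by blast
          ultimately show "d k = ereal (dd k)" unfolding dd_def using ereal_real by force
        qed simp
        then have "sum d (S' - A) = ereal (sum dd (S' - A))" by simp
        with QA have "ereal R \<le> ereal ((\<Sum>j\<in>{1..m}. c j (G j)) + sum dd (S' - A))"
          unfolding c_def by simp
        then show ?thesis unfolding cutval_def by simp
      qed
    qed
  qed
  then obtain y where y0: "\<forall>e. 0 \<le> y e" and yz: "\<forall>e. e \<notin> Ebs S' \<longrightarrow> y e = 0"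
    and yc: "\<forall>j\<in>{1..m}. \<forall>F. F \<subseteq> {e\<in>EEm. snd e = j} \<longrightarrow> sum y F \<le> c j F"
    and yd: "\<forall>k\<in>S'. sum y {e\<in>Ebs S'. fst e = k} \<le> dd k" and yR: "R \<le> sum y (Ebs S')"
    by blast
  have "y \<in> Pwd n m E0 f w d"
    unfolding Pwd_def
  proof (intro CollectI conjI allI impI ballI)
    fix e show "0 \<le> y e" using y0 by blast
  next
    fix e assume "e \<notin> EEm" then have "e \<notin> Ebs S'" using Eb_sub_EE by blast
    then show "y e = 0" using yz by blast
  next
    show "inP n m E0 f (\<lambda>e. w e + y e)" unfolding inP_def
    proof (intro conjI allI ballI impI)
      fix e show "0 \<le> w e + y e" using y0[rule_format, of e] inP_nonneg[OF w, of e] by linarith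
    next
      fix e assume e: "e \<notin> EEm" then have "e \<notin> Ebs S'" using Eb_sub_EE by blast
      then have "y e = 0" using yz by blast
      then show "w e + y e = 0" using inP_zero[OF w e] by simp
    next
      fix j F assume j: "j \<in> {1..m}" and F: "F \<subseteq> Esj j"
      have "F \<subseteq> {e\<in>EEm. snd e = j}" using F by (simp add: Es_def)
      then have "sum y F \<le> c j F" using yc j by blast
      then show "sum (\<lambda>e. w e + y e) F \<le> fxj j F" unfolding c_def by (simp add: sum.distrib)
    qed
  next
    fix k assume k: "k \<in> NNs"
    show "ereal (sum y (Ebs {k})) \<le> d k"
    proof (cases "k \<in> S'")
      case True
      have "Ebs {k} = {e\<in>Ebs S'. fst e = k}" using True unfolding Eb_def by auto
      then have le: "sum y (Ebs {k}) \<le> dd k" using yd True by simp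
      show ?thesis
      proof (cases "d k = \<infinity>")
        case True then show ?thesis by simp
      next
        case False
        have "0 \<le> d k" using d0 k by blast
        then have "d k = ereal (dd k)" unfolding dd_def using False ereal_real by force
        then show ?thesis using le by simp
      qed
    next
      case False
      have "sum y (Ebs {k}) = 0" by (rule sum.neutral) (use yz False in \<open>auto simp: Eb_def\<close>)
      then show ?thesis using d0 k by (simp add: zero_ereal_def)
    qed
  qed
  moreover have "sum xs S' - (\<Sum>k\<in>S'. xw w k) \<le> sum y (Ebs S')" using yR R_def by simp
  ultimately show ?thesis using yz by (intro bexI[of _ y]) auto
qed

end



context mkt
begin

lemma demand_local: "c k = c' k \<Longrightarrow> p k = p' k \<Longrightarrow> demand n B bid c p k = demand n B bid c' p' k"
  unfolding demand_def by simp

lemma dem_pos_mono: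
  assumes b: "Bas w c p" and cc: "c k \<le> c' k" and pp: "p k \<le> p' k"
    and pos: "0 < demand n B bid c' p' k"
  shows "0 < demand n B bid c p k"
proof (cases "c k = 0")
  case True then show ?thesis unfolding demand_def by simp
next
  case False
  have c0: "0 \<le> c k" using b Bas_def by auto
  then have cp: "0 < c k" using False by simp
  have c'0: "c' k \<noteq> 0" using cp cc by simp
  have lt': "c' k < bid k" using pos c'0 unfolding demand_def by (auto split: if_splits)
  then have lt: "c k < bid k" using cc by simp
  show ?thesis
  proof (cases "k \<le> n")
    case True
    have "0 < ereal ((B k - p' k) / c' k)" using pos c'0 lt' True unfolding demand_def by simp
    then have "0 < (B k - p' k) / c' k" by simp
    then have "0 < B k - p' k" using cp cc by (simp add: zero_less_divide_iff)
    then have "0 < (B k - p k) / c k" using pp cp by simp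
    then show ?thesis unfolding demand_def using False lt True by simp
  next
    case False2: False
    then show ?thesis unfolding demand_def using False lt by simp
  qed
qed

lemma split_target:
  assumes "finite S" "l \<in> S"
  shows "ereal (sum xs S - (\<Sum>k\<in>S. xw w k)) =
         ereal (xs l - xw w l) + ereal (sum xs (S - {l}) - (\<Sum>k\<in>S - {l}. xw w k))"
proof -
  have "sum xs S = xs l + sum xs (S - {l})" by (rule sum.remove[OF assms])
  moreover have "(\<Sum>k\<in>S. xw w k) = xw w l + (\<Sum>k\<in>S - {l}. xw w k)" by (rule sum.remove[OF assms])
  ultimately show ?thesis by simp
qed

lemma Inv_init: "Inv pca_init"
  unfolding Inv_def
proof (intro conjI)
  show "inP n m E0 f (wt pca_init)" unfolding inP_def pca_init_def
    using fx_nonneg by simp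
  show "\<forall>k. dem pca_init k = demand n B bid (clk pca_init) (pay pca_init) k"
    unfolding pca_init_def demand_def by simp
  show "Bas (wt pca_init) (clk pca_init) (pay pca_init)"
    unfolding Bas_def pca_init_def xw_def using B_nonneg by (simp add: NN_def)
  show "QP (wt pca_init) (dem pca_init)"
    unfolding QP_def
  proof (intro allI impI)
    fix S S' G
    assume S: "S \<subseteq> {k \<in> NNs. 0 < dem pca_init k}" and S'S: "S' \<subseteq> S"
      and G: "\<forall>j\<in>{1..m}. G j \<subseteq> Esj j \<and> Esj j \<inter> Ebs S' \<subseteq> G j"
    have SN: "S \<subseteq> NNs" using S by blast
    have fS: "finite S" by (rule finite_subset[OF SN fin_NN])
    have x0: "(\<Sum>k\<in>S. xw (wt pca_init) k) = 0" unfolding xw_def pca_init_def by simp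
    have w0: "(\<Sum>j\<in>{1..m}. fxj j (G j) - sum (wt pca_init) (G j)) = (\<Sum>j\<in>{1..m}. fxj j (G j))"
      unfolding pca_init_def by simp
    show "ereal (sum xs S - (\<Sum>k\<in>S. xw (wt pca_init) k))
          \<le> ereal (\<Sum>j\<in>{1..m}. fxj j (G j) - sum (wt pca_init) (G j)) + sum (dem pca_init) (S - S')"
    proof (cases "S - S' = {}")
      case False
      then obtain k where "k \<in> S - S'" by blast
      then have "sum (dem pca_init) (S - S') = \<infinity>"
        unfolding sum_Pinfty using fS by (auto simp: pca_init_def)
      then show ?thesis by simp
    next
      case True
      then have SS: "S' = S" using S'S by blast
      have "sum xs S \<le> fN n m E0 f (Ebs S)" by (rule xs_le_f[OF SN])
      also have "\<dots> = (\<Sum>j\<in>{1..m}. fxj j (Ebs S \<inter> Esj j))" unfolding fN_def ..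
      also have "\<dots> \<le> (\<Sum>j\<in>{1..m}. fxj j (G j))"
      proof (rule sum_mono)
        fix j assume j: "j \<in> {1..m}"
        show "fxj j (Ebs S \<inter> Esj j) \<le> fxj j (G j)"
          by (rule fx_mono[OF j]) (use G j SS in auto)
      qed
      finally have le: "sum xs S \<le> (\<Sum>j\<in>{1..m}. fxj j (G j))" .
      have "sum (dem pca_init) (S - S') = 0" unfolding True by simp
      then show ?thesis using x0 w0 le by simp
    qed
  qed
qed

lemma Inv_clock:
  assumes I: "Inv st"
  shows "Inv (clock_advance n m B bid eps st)"
proof -
  define l where "l = ptr st"
  define c where "c = clk st"
  define p where "p = pay st"
  define w where "w = wt st"
  define d where "d = dem st"
  define c' where "c' = c(l := c l + eps)"
  define d' where "d' = d(l := demand n B bid c' p l)"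
  have st': "clock_advance n m B bid eps st = st\<lparr>clk := c', dem := d', ptr := (if l < n + m then l + 1 else 1)\<rparr>"
    unfolding clock_advance_def Let_def c'_def d'_def l_def c_def d_def p_def by simp
  have wI: "inP n m E0 f w" and dI: "\<forall>k. d k = demand n B bid c p k" and bI: "Bas w c p"
    and qI: "QP w d" using I unfolding Inv_def w_def c_def p_def d_def by auto
  have d'I: "\<forall>k. d' k = demand n B bid c' p k"
  proof
    fix k show "d' k = demand n B bid c' p k"
    proof (cases "k = l")
      case True then show ?thesis unfolding d'_def by simp
    next
      case False
      then have "d' k = d k" unfolding d'_def by simp
      also have "\<dots> = demand n B bid c p k" using dI by blast
      also have "\<dots> = demand n B bid c' p k" by (rule demand_local) (use False c'_def in auto)
      finally show ?thesis .
    qed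
  qed
  have b'I: "Bas w c' p"
    unfolding Bas_def
  proof (intro conjI ballI allI impI)
    fix k show "0 \<le> c' k" using bI eps_pos unfolding Bas_def c'_def by (simp add: add_nonneg_nonneg less_imp_le)
  next
    fix k assume k: "k \<in> NNs"
    have "p k \<le> c k * xw w k" using bI k Bas_def by blast
    also have "c k * xw w k \<le> c' k * xw w k"
      using xw_nonneg[OF wI] eps_pos unfolding c'_def by (simp add: mult_right_mono)
    finally show "p k \<le> c' k * xw w k" .
  next
    fix k assume "k \<in> NNs" "k \<le> n" then show "p k \<le> B k" using bI Bas_def by blast
  qed
  have Xsub: "0 < d k" if "k \<in> NNs" "0 < d' k" for k
  proof -
    have "0 < demand n B bid c p k"
    proof (rule dem_pos_mono[OF bI])
      show "c k \<le> c' k" unfolding c'_def using eps_pos by simp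
      show "p k \<le> p k" by simp
      show "0 < demand n B bid c' p k" using that d'I by simp
    qed
    then show ?thesis using dI by simp
  qed
  have q'I: "QP w d'"
    unfolding QP_def
  proof (intro allI impI)
    fix S S' G
    assume S: "S \<subseteq> {k \<in> NNs. 0 < d' k}" and S'S: "S' \<subseteq> S"
      and G: "\<forall>j\<in>{1..m}. G j \<subseteq> Esj j \<and> Esj j \<inter> Ebs S' \<subseteq> G j"
    have SN: "S \<subseteq> NNs" using S by blast
    have fS: "finite S" by (rule finite_subset[OF SN fin_NN])
    have SX: "S \<subseteq> {k \<in> NNs. 0 < d k}" using S Xsub by blast
    let ?C = "ereal (\<Sum>j\<in>{1..m}. fxj j (G j) - sum w (G j))"
    show "ereal (sum xs S - (\<Sum>k\<in>S. xw w k)) \<le> ?C + sum d' (S - S')"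
    proof (cases "l \<in> S - S'")
      case False
      have "sum d' (S - S') = sum d (S - S')" by (rule sum.cong) (use False d'_def in auto)
      then show ?thesis using qI SX S'S G unfolding QP_def by simp
    next
      case True
      have fSS: "finite (S - S')" using fS by simp
      have "sum d' (S - S') = d' l + sum d' (S - S' - {l})" by (rule sum.remove[OF fSS True])
      also have "sum d' (S - S' - {l}) = sum d ((S - {l}) - S')"
        by (rule sum.cong) (auto simp: d'_def)
      finally have ds: "sum d' (S - S') = d' l + sum d ((S - {l}) - S')" .
      have old: "ereal (sum xs (S - {l}) - (\<Sum>k\<in>S - {l}. xw w k)) \<le> ?C + sum d ((S - {l}) - S')"
      proof -
        have a1: "S - {l} \<subseteq> {k \<in> NNs. 0 < d k}" using SX by blast
        have a2: "S' \<subseteq> S - {l}" using S'S True by blast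
        show ?thesis by (rule qI[unfolded QP_def, rule_format, OF a1 a2]) (use G in blast)
      qed
      have lN: "l \<in> NNs" "0 < d' l" using True S by auto
      have ap: "ereal (xs l - xw w l) \<le> d' l"
        using AP[OF b'I lN(1)] lN(2) d'I by simp
      have "ereal (sum xs S - (\<Sum>k\<in>S. xw w k)) =
            ereal (xs l - xw w l) + ereal (sum xs (S - {l}) - (\<Sum>k\<in>S - {l}. xw w k))"
        using split_target[OF fS] True by blast
      also have "\<dots> \<le> d' l + (?C + sum d ((S - {l}) - S'))" by (rule add_mono[OF ap old])
      also have "\<dots> = ?C + sum d' (S - S')" using ds by (simp add: ac_simps)
      finally show ?thesis .
    qed
  qed
  show ?thesis unfolding Inv_def st' using wI d'I b'I q'I unfolding w_def p_def by simp
qed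

end



lemma ereal_shift:
  fixes D :: ereal and L C a :: real
  assumes "ereal L \<le> ereal C + D"
  shows "ereal (L - a) \<le> ereal (C - a) + D"
proof (cases D)
  case (real r) then show ?thesis using assms by simp
next
  case PInf then show ?thesis by simp
next
  case MInf then show ?thesis using assms by simp
qed

context mkt
begin

lemma sum_zero_off:
  fixes xi :: "nat \<times> nat \<Rightarrow> real"
  assumes "finite F" "\<forall>e. e \<notin> Ebs {i} \<longrightarrow> xi e = 0"
  shows "sum xi F = sum xi (F \<inter> Ebs {i})"
proof -
  have "sum xi F = sum xi (F \<inter> Ebs {i}) + sum xi (F - Ebs {i})"
    using assms(1) by (metis sum.Int_Diff)
  moreover have "sum xi (F - Ebs {i}) = 0" by (rule sum.neutral) (use assms(2) in blast)
  ultimately show ?thesis by simp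
qed

lemma Inv_clinch:
  assumes I: "Inv st" and iN: "i \<in> NNs"
    and mc: "max_clinch n m E0 f (wt st) (dem st) i xi"
  shows "Inv (clinch_update n m E0 B bid i xi st)"
proof -
  define c where "c = clk st"
  define p where "p = pay st"
  define w where "w = wt st"
  define d where "d = dem st"
  define a where "a = sum xi (Ebs {i})"
  define p' where "p' = p(i := p i + c i * a)"
  define w' where "w' = (\<lambda>e. w e + xi e)"
  define d' where "d' = demand n B bid c p'"
  have st': "wt (clinch_update n m E0 B bid i xi st) = w'"
    "pay (clinch_update n m E0 B bid i xi st) = p'"
    "dem (clinch_update n m E0 B bid i xi st) = d'"
    "clk (clinch_update n m E0 B bid i xi st) = c"
    unfolding clinch_update_def Let_def w'_def p'_def d'_def w_def p_def c_def a_def by simp_all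
  have wI: "inP n m E0 f w" and dI: "\<forall>k. d k = demand n B bid c p k" and bI: "Bas w c p"
    and qI: "QP w d" using I unfolding Inv_def w_def c_def p_def d_def by auto
  have c0: "\<forall>k. 0 \<le> c k" using bI Bas_def by blast
  have cl: "clinchable n m E0 f w d i xi" using mc unfolding max_clinch_def w_def d_def by blast
  have xi0: "\<forall>e. 0 \<le> xi e" and xiz: "\<forall>e. e \<notin> Ebs {i} \<longrightarrow> xi e = 0"
    and Peq: "Pi_wd n m E0 f w d i xi = Pi_wd n m E0 f w d i (\<lambda>_. 0)"
    using cl unfolding clinchable_def by auto
  have d0: "\<forall>k\<in>NNs. 0 \<le> d k" using dem_nonneg[OF bI] dI by simp
  have transfer: "\<exists>y1\<in>Pwd n m E0 f w d. (\<forall>e\<in>Ebs {i}. y1 e = xi e) \<and>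
        (\<forall>k\<in>NNs - {i}. sum y1 (Ebs {k}) = sum y (Ebs {k}))"
    if y: "y \<in> Pwd n m E0 f w d" "\<forall>e\<in>Ebs {i}. y e = 0" for y
  proof -
    define u where "u = (\<lambda>k. if k \<in> NNs - {i} then sum y (Ebs {k}) else 0)"
    have "u \<in> Pi_wd n m E0 f w d i (\<lambda>_. 0)"
      unfolding Pi_wd_def u_def using y by auto
    then have "u \<in> Pi_wd n m E0 f w d i xi" using Peq by simp
    then obtain y1 where y1: "y1 \<in> Pwd n m E0 f w d" "\<forall>e\<in>Ebs {i}. y1 e = xi e"
      "\<forall>k\<in>NNs - {i}. u k = sum y1 (Ebs {k})" unfolding Pi_wd_def by blast
    show ?thesis using y1 unfolding u_def by auto
  qed
  obtain y1 where y1: "y1 \<in> Pwd n m E0 f w d" "\<forall>e\<in>Ebs {i}. y1 e = xi e"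
    using transfer[OF Pwd_zero[OF wI d0]] by auto
  have y1P: "inP n m E0 f (\<lambda>e. w e + y1 e)" and y1nn: "\<forall>e. 0 \<le> y1 e"
    and y1d: "\<forall>k\<in>NNs. ereal (sum y1 (Ebs {k})) \<le> d k"
    using y1(1) unfolding Pwd_def by auto
  have a_eq: "a = sum y1 (Ebs {i})" unfolding a_def using y1(2) by (intro sum.cong) auto
  have a_d: "ereal a \<le> d i" using y1d iN a_eq by simp
  have a0: "0 \<le> a" unfolding a_def by (rule sum_nonneg) (use xi0 in blast)
  have w'I: "inP n m E0 f w'"
  proof (rule inP_down[OF y1P])
    fix e
    have "xi e \<le> y1 e" using y1(2) xiz[rule_format, of e] y1nn[rule_format, of e] by (cases "e \<in> Ebs {i}") auto
    then show "0 \<le> w' e \<and> w' e \<le> w e + y1 e" unfolding w'_def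
      using inP_nonneg[OF wI, of e] xi0[rule_format, of e] by simp
  qed
  have xw': "xw w' k = xw w k + (if k = i then a else 0)" for k
  proof -
    have "xw w' k = xw w k + sum xi (Ebs {k})" unfolding xw_def w'_def by (simp add: sum.distrib)
    moreover have "k \<noteq> i \<Longrightarrow> sum xi (Ebs {k}) = 0"
      by (rule sum.neutral) (use xiz Eb_single_disj in blast)
    ultimately show ?thesis unfolding a_def by auto
  qed
  have p'_ge: "p k \<le> p' k" for k
    unfolding p'_def using c0 a0 by (simp add: mult_nonneg_nonneg)
  have b'I: "Bas w' c p'"
    unfolding Bas_def
  proof (intro conjI ballI allI impI)
    fix k show "0 \<le> c k" using c0 by blast
  next
    fix k assume k: "k \<in> NNs"
    have pk: "p k \<le> c k * xw w k" using bI k Bas_def by blast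
    show "p' k \<le> c k * xw w' k"
    proof (cases "k = i")
      case True
      then show ?thesis using pk unfolding p'_def xw' by (simp add: algebra_simps)
    next
      case False then show ?thesis using pk unfolding p'_def xw' by simp
    qed
  next
    fix k assume k: "k \<in> NNs" and kn: "k \<le> n"
    have pk: "p k \<le> B k" using bI k kn Bas_def by blast
    show "p' k \<le> B k"
    proof (cases "k = i")
      case False then show ?thesis using pk unfolding p'_def by simp
    next
      case True
      have "c i * a \<le> B i - p i"
      proof (cases "c i = 0")
        case True then show ?thesis using pk \<open>k = i\<close> by simp
      next
        case False
        then have cp: "0 < c i" using c0 by (metis less_eq_real_def)
        show ?thesis
        proof (cases "c i < bid i")
          case True
          then have "d i = ereal ((B i - p i) / c i)" using dI False kn \<open>k = i\<close> unfolding demand_def by simp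
          then have "a \<le> (B i - p i) / c i" using a_d by simp
          then show ?thesis using cp by (simp add: field_simps)
        next
          case False2: False
          then have "d i = 0" using dI False unfolding demand_def by simp
          then have "a = 0" using a_d a0 by (simp add: zero_ereal_def)
          then show ?thesis using pk \<open>k = i\<close> by simp
        qed
      qed
      then show ?thesis using True unfolding p'_def by simp
    qed
  qed
  have d'_eq: "d' k = d k" if "k \<noteq> i" for k
    unfolding d'_def using dI demand_local[of c k c p p'] that p'_def by simp
  have Xsub: "0 < d k" if "0 < d' k" for k
  proof -
    have "0 < demand n B bid c p k"
      by (rule dem_pos_mono[OF bI order.refl p'_ge]) (use that in \<open>simp add: d'_def\<close>)
    then show ?thesis using dI by simp
  qed
  have q'I: "QP w' d'"
    unfolding QP_def
  proof (intro allI impI)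
    fix S S' G
    assume S: "S \<subseteq> {k \<in> NNs. 0 < d' k}" and S'S: "S' \<subseteq> S"
      and G: "\<forall>j\<in>{1..m}. G j \<subseteq> Esj j \<and> Esj j \<inter> Ebs S' \<subseteq> G j"
    have SN: "S \<subseteq> NNs" using S by blast
    have fS: "finite S" by (rule finite_subset[OF SN fin_NN])
    have fS': "finite S'" by (rule finite_subset[OF S'S fS])
    have SX: "S \<subseteq> {k \<in> NNs. 0 < d k}" using S Xsub by blast
    have fG: "finite (G j)" if "j \<in> {1..m}" for j using G that fin_Es finite_subset by metis
    define C where "C = (\<Sum>j\<in>{1..m}. fxj j (G j) - sum w (G j))"
    have C'eq: "(\<Sum>j\<in>{1..m}. fxj j (G j) - sum w' (G j)) = C - (\<Sum>j\<in>{1..m}. sum xi (G j))"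
      unfolding C_def w'_def by (simp add: sum.distrib sum_subtractf)
    have old: "ereal (sum xs S - (\<Sum>k\<in>S. xw w k)) \<le> ereal C + sum d (S - S')"
      unfolding C_def by (rule qI[unfolded QP_def, rule_format, OF SX S'S]) (use G in blast)
    show "ereal (sum xs S - (\<Sum>k\<in>S. xw w' k))
          \<le> ereal (\<Sum>j\<in>{1..m}. fxj j (G j) - sum w' (G j)) + sum d' (S - S')"
    proof (cases "i \<in> S'")
      case True
      have xiG: "sum xi (G j) = sum xi (Ebs {i} \<inter> Esj j)" if j: "j \<in> {1..m}" for j
      proof -
        have "sum xi (G j) = sum xi (G j \<inter> Ebs {i})" by (rule sum_zero_off[OF fG[OF j] xiz])
        moreover have "G j \<inter> Ebs {i} = Ebs {i} \<inter> Esj j"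
        proof
          show "G j \<inter> Ebs {i} \<subseteq> Ebs {i} \<inter> Esj j" using G j by blast
          have "Ebs {i} \<subseteq> Ebs S'" using True unfolding Eb_def by auto
          then show "Ebs {i} \<inter> Esj j \<subseteq> G j \<inter> Ebs {i}" using G j by blast
        qed
        ultimately show ?thesis by simp
      qed
      have "(\<Sum>j\<in>{1..m}. sum xi (G j)) = (\<Sum>j\<in>{1..m}. sum xi (Ebs {i} \<inter> Esj j))"
        using xiG by (rule sum.cong[OF refl])
      also have "\<dots> = a" unfolding a_def by (rule sum_sellers[OF Eb_sub_EE])
      finally have sxi: "(\<Sum>j\<in>{1..m}. sum xi (G j)) = a" .
      have iS: "i \<in> S" using True S'S by blast
      have "(\<Sum>k\<in>S. xw w' k) = (\<Sum>k\<in>S. xw w k) + (\<Sum>k\<in>S. if k = i then a else 0)"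
        unfolding xw' by (simp add: sum.distrib)
      also have "(\<Sum>k\<in>S. if k = i then a else 0) = a" using iS fS by simp
      finally have xS: "(\<Sum>k\<in>S. xw w' k) = (\<Sum>k\<in>S. xw w k) + a" .
      have "sum d' (S - S') = sum d (S - S')"
      proof (rule sum.cong)
        fix x assume "x \<in> S - S'"
        then have "x \<noteq> i" using True by blast
        then show "d' x = d x" by (rule d'_eq)
      qed simp
      moreover have "ereal (sum xs S - (\<Sum>k\<in>S. xw w k) - a) \<le> ereal (C - a) + sum d (S - S')"
        by (rule ereal_shift[OF old])
      ultimately show ?thesis unfolding C'eq sxi xS by (simp add: algebra_simps)
    next
      case False
      have S'X: "S' \<subseteq> {k \<in> NNs. 0 < d k}" using SX S'S by blast
      obtain y where y: "y \<in> Pwd n m E0 f w d" and yz: "\<forall>e. e \<notin> Ebs S' \<longrightarrow> y e = 0"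
        and yR: "sum xs S' - (\<Sum>k\<in>S'. xw w k) \<le> sum y (Ebs S')"
        using flowlem[OF wI d0 qI S'X] by blast
      have yi: "\<forall>e\<in>Ebs {i}. y e = 0" using yz False unfolding Eb_def by auto
      obtain z where z: "z \<in> Pwd n m E0 f w d" "\<forall>e\<in>Ebs {i}. z e = xi e"
        "\<forall>k\<in>NNs - {i}. sum z (Ebs {k}) = sum y (Ebs {k})"
        using transfer[OF y yi] by blast
      have zP: "inP n m E0 f (\<lambda>e. w e + z e)" and znn: "\<forall>e. 0 \<le> z e"
        using z(1) unfolding Pwd_def by auto
      have perj: "sum z (Ebs S' \<inter> Esj j) \<le> fxj j (G j) - sum w (G j) - sum xi (G j)"
        if j: "j \<in> {1..m}" for j
      proof -
        have Gj: "G j \<subseteq> Esj j" "Esj j \<inter> Ebs S' \<subseteq> G j" using G j by auto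
        have "sum (\<lambda>e. w e + z e) (G j) \<le> fxj j (G j)" by (rule inP_le[OF zP j Gj(1)])
        then have h1: "sum w (G j) + sum z (G j) \<le> fxj j (G j)" by (simp add: sum.distrib)
        have disj: "(G j \<inter> Ebs {i}) \<inter> (Ebs S' \<inter> Esj j) = {}" using False unfolding Eb_def by auto
        have fin1: "finite (G j \<inter> Ebs {i})" "finite (Ebs S' \<inter> Esj j)" using fG[OF j] fin_Es by auto
        have "sum z (G j \<inter> Ebs {i}) + sum z (Ebs S' \<inter> Esj j) = sum z ((G j \<inter> Ebs {i}) \<union> (Ebs S' \<inter> Esj j))"
          by (rule sum.union_disjoint[symmetric]) (use fin1 disj in auto)
        also have "\<dots> \<le> sum z (G j)"
          by (rule sum_mono2[OF fG[OF j]]) (use Gj znn in auto)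
        finally have h2: "sum z (G j \<inter> Ebs {i}) + sum z (Ebs S' \<inter> Esj j) \<le> sum z (G j)" .
        have "sum z (G j \<inter> Ebs {i}) = sum xi (G j \<inter> Ebs {i})" using z(2) by (intro sum.cong) auto
        also have "\<dots> = sum xi (G j)" by (rule sum_zero_off[OF fG[OF j] xiz, symmetric])
        finally have h3: "sum z (G j \<inter> Ebs {i}) = sum xi (G j)" .
        show ?thesis using h1 h2 h3 by linarith
      qed
      have "sum y (Ebs S') = (\<Sum>k\<in>S'. sum y (Ebs {k}))" by (rule sum_agents[OF fS', symmetric])
      also have "\<dots> = (\<Sum>k\<in>S'. sum z (Ebs {k}))"
      proof (rule sum.cong)
        fix x assume x: "x \<in> S'"
        then have "x \<in> NNs - {i}" using False S'S SN by blast
        then show "sum y (Ebs {x}) = sum z (Ebs {x})" using z(3) by simp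
      qed simp
      also have "\<dots> = sum z (Ebs S')" by (rule sum_agents[OF fS'])
      also have "\<dots> = (\<Sum>j\<in>{1..m}. sum z (Ebs S' \<inter> Esj j))" by (rule sum_sellers[OF Eb_sub_EE, symmetric])
      also have "\<dots> \<le> (\<Sum>j\<in>{1..m}. fxj j (G j) - sum w (G j) - sum xi (G j))"
        by (rule sum_mono) (rule perj)
      also have "\<dots> = C - (\<Sum>j\<in>{1..m}. sum xi (G j))" unfolding C_def by (simp add: sum_subtractf)
      finally have flow: "sum xs S' - (\<Sum>k\<in>S'. xw w k) \<le> C - (\<Sum>j\<in>{1..m}. sum xi (G j))" using yR by linarith
      have xS': "(\<Sum>k\<in>S'. xw w' k) = (\<Sum>k\<in>S'. xw w k)" by (rule sum.cong) (use False xw' in auto)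
      have apS: "ereal (\<Sum>k\<in>S - S'. xs k - xw w' k) \<le> sum d' (S - S')"
      proof -
        have "(\<Sum>k\<in>S - S'. ereal (xs k - xw w' k)) \<le> sum d' (S - S')"
        proof (rule sum_mono)
          fix k assume k: "k \<in> S - S'"
          then have kN: "k \<in> NNs" "0 < d' k" using S by auto
          show "ereal (xs k - xw w' k) \<le> d' k" using AP[OF b'I kN(1)] kN(2) unfolding d'_def by simp
        qed
        then show ?thesis by simp
      qed
      have split1: "sum xs S = sum xs S' + sum xs (S - S')" using sum.subset_diff[OF S'S fS, of xs] by simp
      have split2: "(\<Sum>k\<in>S. xw w' k) = (\<Sum>k\<in>S'. xw w' k) + (\<Sum>k\<in>S - S'. xw w' k)"
        using sum.subset_diff[OF S'S fS, of "xw w'"] by simp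
      have "ereal (sum xs S - (\<Sum>k\<in>S. xw w' k)) =
            ereal (sum xs S' - (\<Sum>k\<in>S'. xw w k)) + ereal (\<Sum>k\<in>S - S'. xs k - xw w' k)"
        unfolding split1 split2 xS' by (simp add: sum_subtractf)
      also have "\<dots> \<le> ereal (C - (\<Sum>j\<in>{1..m}. sum xi (G j))) + sum d' (S - S')"
        by (rule add_mono) (use flow apS in simp_all)
      finally show ?thesis unfolding C'eq .
    qed
  qed
  show ?thesis unfolding Inv_def st' using w'I b'I q'I d'_def by simp
qed

end



context mkt
begin

lemma Inv_upto:
  assumes "clinch_upto n m E0 f B bid k st st1" and "Inv st"
  shows "Inv st1"
  using assms
proof (induction rule: clinch_upto.induct)
  case (clinch_zero st)
  then show ?case .
next
  case (clinch_step k st st1 xi)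
  have "k + 1 \<in> NNs" using clinch_step.hyps(2) unfolding NN_def by simp
  then show ?case using Inv_clinch[OF clinch_step.IH[OF clinch_step.prems] _ clinch_step.hyps(3)] by blast
qed

lemma Inv_reach:
  assumes "pca_reach n m E0 f B bid eps st"
  shows "Inv st"
  using assms
proof (induction rule: pca_reach.induct)
  case reach_init
  then show ?case by (rule Inv_init)
next
  case (reach_iter st st')
  obtain st1 where st1: "clinch_upto n m E0 f B bid (n + m) st st1"
    and st': "st' = clock_advance n m B bid eps st1"
    using reach_iter.hyps(3) unfolding pca_iter_def by blast
  have "Inv st1" by (rule Inv_upto[OF st1 reach_iter.IH])
  then show ?case using Inv_clock st' by simp
qed

lemma final:
  assumes I: "Inv st" and S: "S \<subseteq> {i \<in> NNs. dem st i > 0}"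
  shows "gfun n m E0 f (\<lambda>i. sum (wt st) (Ebs {i})) (dem st) S
           \<ge> ereal (sum xs S - (\<Sum>i\<in>S. sum (wt st) (Ebs {i})))"
proof -
  define w where "w = wt st"
  define d where "d = dem st"
  define x where "x = (\<lambda>i. sum w (Ebs {i}))"
  have qI: "QP w d" using I unfolding Inv_def w_def d_def by blast
  have SN: "S \<subseteq> NNs" using S by blast
  have fS: "finite S" by (rule finite_subset[OF SN fin_NN])
  define bnd where "bnd = ereal (sum xs S - (\<Sum>i\<in>S. x i))"
  define Inner where "Inner = (\<lambda>S'. {ereal (fN n m E0 f (Ebs S'') - sum x S'') | S''. S' \<subseteq> S'' \<and> S'' \<subseteq> NNs})"
  define Outer where "Outer = {Min (Inner S') + sum d (S - S') | S'. S' \<subseteq> S}"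
  have fin_inner: "finite (Inner S')" for S'
  proof -
    have "Inner S' \<subseteq> (\<lambda>S''. ereal (fN n m E0 f (Ebs S'') - sum x S'')) ` Pow NNs"
      unfolding Inner_def by auto
    moreover have "finite (Pow NNs)" using fin_NN by simp
    ultimately show ?thesis by (meson finite_imageI finite_subset)
  qed
  have key: "bnd \<le> Min (Inner S') + sum d (S - S')" if S'S: "S' \<subseteq> S" for S'
  proof -
    have ne: "Inner S' \<noteq> {}" unfolding Inner_def using S'S SN by blast
    have "Min (Inner S') \<in> Inner S'" by (rule Min_in[OF fin_inner ne])
    then obtain S'' where S'': "S' \<subseteq> S''" "S'' \<subseteq> NNs"
      and eq: "Min (Inner S') = ereal (fN n m E0 f (Ebs S'') - sum x S'')"
      unfolding Inner_def by blast
    have fS'': "finite S''" by (rule finite_subset[OF S''(2) fin_NN])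
    define G where "G = (\<lambda>j. Ebs S'' \<inter> Esj j)"
    have Gv: "\<forall>j\<in>{1..m}. G j \<subseteq> Esj j \<and> Esj j \<inter> Ebs S' \<subseteq> G j"
      unfolding G_def using S''(1) unfolding Eb_def by auto
    have SX: "S \<subseteq> {k \<in> NNs. 0 < d k}" using S unfolding d_def by simp
    have q: "ereal (sum xs S - (\<Sum>k\<in>S. xw w k)) \<le>
        ereal (\<Sum>j\<in>{1..m}. fxj j (G j) - sum w (G j)) + sum d (S - S')"
      by (rule qI[unfolded QP_def, rule_format, OF SX S'S]) (use Gv in blast)
    have "(\<Sum>j\<in>{1..m}. fxj j (G j) - sum w (G j)) = fN n m E0 f (Ebs S'') - sum x S''"
    proof -
      have "(\<Sum>j\<in>{1..m}. fxj j (G j)) = fN n m E0 f (Ebs S'')" unfolding fN_def G_def ..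
      moreover have "(\<Sum>j\<in>{1..m}. sum w (G j)) = sum w (Ebs S'')"
        unfolding G_def by (rule sum_sellers[OF Eb_sub_EE])
      moreover have "sum w (Ebs S'') = sum x S''" unfolding x_def by (rule sum_agents[OF fS'', symmetric])
      ultimately show ?thesis by (simp add: sum_subtractf)
    qed
    moreover have "(\<Sum>k\<in>S. xw w k) = (\<Sum>i\<in>S. x i)" unfolding xw_def x_def ..
    ultimately show ?thesis using q eq unfolding bnd_def by simp
  qed
  have "bnd \<le> Min Outer"
  proof (subst Min_ge_iff)
    have "Outer = (\<lambda>S'. Min (Inner S') + sum d (S - S')) ` Pow S" unfolding Outer_def by auto
    then show "finite Outer" using fS by simp
    show "Outer \<noteq> {}" unfolding Outer_def by blast
    show "\<forall>a\<in>Outer. bnd \<le> a" unfolding Outer_def using key by blast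
  qed
  moreover have "gfun n m E0 f x d S = Min Outer"
    unfolding gfun_def Outer_def Inner_def ..
  ultimately show ?thesis unfolding bnd_def x_def w_def d_def by simp
qed

end

theorem theorem3p7:
  fixes n m :: nat and E0 :: "(nat \<times> nat) set"
    and f :: "nat \<Rightarrow> (nat \<times> nat) set \<Rightarrow> real"
    and v B rho :: "nat \<Rightarrow> real" and eps :: real
    and xs :: "nat \<Rightarrow> real" and st :: pca_state and S :: "nat set"
  assumes E0: "E0 \<subseteq> {1..n} \<times> {1..m}"
    and f_empty: "\<forall>j\<in>{1..m}. f j {} = 0"
    and f_nonneg: "\<forall>j\<in>{1..m}. \<forall>F. F \<subseteq> {e \<in> E0. snd e = j} \<longrightarrow> 0 \<le> f j F"
    and f_mono: "\<forall>j\<in>{1..m}. \<forall>F G. F \<subseteq> G \<and> G \<subseteq> {e \<in> E0. snd e = j} \<longrightarrow> f j F \<le> f j G"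
    and f_submod: "\<forall>j\<in>{1..m}. \<forall>F G. F \<subseteq> {e \<in> E0. snd e = j} \<and> G \<subseteq> {e \<in> E0. snd e = j} \<longrightarrow>
                      f j (F \<union> G) + f j (F \<inter> G) \<le> f j F + f j G"
    and v_pos: "\<forall>i\<in>{1..n}. 0 < v i"
    and B_nonneg: "\<forall>i\<in>{1..n}. 0 \<le> B i"
    and rho_pos: "\<forall>j\<in>{1..m}. 0 < rho j"
    and eps_pos: "0 < eps"
    and v_grid: "\<forall>i\<in>{1..n}. \<exists>k::nat. 1 \<le> k \<and> v i = real k * eps"
    and rho_grid: "\<forall>j\<in>{1..m}. \<exists>k::nat. 1 \<le> k \<and> rho j = real k * eps"
    and xstar: "xstar_eqs n m E0 f v B rho xs"
    and reach: "pca_reach n m E0 f B (Vx n v rho) eps st"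
    and running: "\<exists>i\<in>NN n m. dem st i \<noteq> 0"
    and S: "S \<subseteq> {i \<in> NN n m. dem st i > 0}"
  shows "gfun n m E0 f (\<lambda>i. sum (wt st) (Eb n m E0 {i})) (dem st) S
           \<ge> ereal (sum xs S - (\<Sum>i\<in>S. sum (wt st) (Eb n m E0 {i})))"
proof -
  interpret mkt n m E0 f v B rho eps xs
    by (unfold_locales) (use assms in auto)
  show ?thesis by (rule final[OF Inv_reach[OF reach] S])
qed


end
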